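(* Let $h$ be a Riemannian metric on a 3-dimensional domain, $\phi>0$ a smooth function of time, and consider the complete space-time with metric $g_{00}=\phi(t)^{-2}$, $g_{0i}=g_{i0}=0$, $g_{ij}=-h_{ij}(\vec x)$. If $u$ solves the Dirac equation $i\phi\partial_tu-Hu=0$, with $H$ as in the context, then $u$ also solves $$-(\phi\partial_t)^2u+\Delta_hu-\tfrac14\mathcal R_hu-m^2u=0,$$ where $\Delta_h$ is the Laplace–Beltrami operator and $\mathcal R_h$ the scalar curvature of $h$.
   Context: Dirac matrices: $\gamma^0=\mathrm{diag}(1,1,-1,-1)$, $\gamma^k=\gamma^0\alpha_k$, $\alpha_k=\begin{pmatrix}0&\sigma_k\\ \sigma_k&0\end{pmatrix}$ with $\sigma_k$ the Pauli matrices; $\eta=\mathrm{diag}(1,-1,-1,-1)$, $\gamma_a=\eta_{ab}\gamma^b$. Let $f_a^i$ be a time-independent dreibein ($h^{ij}=\sum_{a=1}^3f_a^if_a^j$), $\Lambda^k_{ij}$ the Christoffel symbols of $h$, $\alpha_i^{ab}=f^a_j\partial_if^{jb}+f^a_j\Lambda^j_{ik}f^{kb}$, $D_j=\partial_j+\frac18\alpha_j^{ab}[\gamma_a,\gamma_b]$, $\mathcal H=i\gamma^af_a^jD_j$, $m\ge0$, $H=-\gamma^0(\mathcal H+m)$, acting on $\mathbb{C}^4$-valued functions $u(t,\vec x)$. *)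

theory Defs
  imports "HOL-Analysis.Analysis"
begin

definition dpart :: "'a::euclidean_space \<Rightarrow> ('a \<Rightarrow> 'b::real_normed_vector) \<Rightarrow> 'a \<Rightarrow> 'b" where
  "dpart v F x = vector_derivative (\<lambda>s. F (x + s *\<^sub>R v)) (at 0)"

fun iter_dpart :: "'a::euclidean_space list \<Rightarrow> ('a \<Rightarrow> 'b::real_normed_vector) \<Rightarrow> 'a \<Rightarrow> 'b" where
  "iter_dpart [] F = F"
| "iter_dpart (v # vs) F = dpart v (iter_dpart vs F)"

definition smooth_on :: "'a::euclidean_space set \<Rightarrow> ('a \<Rightarrow> 'b::real_normed_vector) \<Rightarrow> bool" where
  "smooth_on S F \<longleftrightarrow>
     (\<forall>vs. set vs \<subseteq> Basis \<longrightarrow>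
        continuous_on S (iter_dpart vs F) \<and>
        (\<forall>v\<in>Basis. \<forall>x\<in>S.
           ((\<lambda>s. iter_dpart vs F (x + s *\<^sub>R v)) has_vector_derivative dpart v (iter_dpart vs F) x) (at 0)))"

definition pd :: "3 \<Rightarrow> (real^3 \<Rightarrow> 'b::real_normed_vector) \<Rightarrow> real^3 \<Rightarrow> 'b" where
  "pd i F x = dpart (axis i 1) F x"

definition dt :: "(real \<Rightarrow> real^3 \<Rightarrow> 'b::real_normed_vector) \<Rightarrow> real \<Rightarrow> real^3 \<Rightarrow> 'b" where
  "dt u t x = vector_derivative (\<lambda>s. u s x) (at t)"

definition gamma0 :: "complex^4^4" where
  "gamma0 = vector [vector [1,0,0,0], vector [0,1,0,0], vector [0,0,-1,0], vector [0,0,0,-1]]"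

definition pauli :: "3 \<Rightarrow> complex^2^2" where
  "pauli k = (if k = 1 then vector [vector [0,1], vector [1,0]]
              else if k = 2 then vector [vector [0,-\<i>], vector [\<i>,0]]
              else vector [vector [1,0], vector [0,-1]])"

text \<open>Block structure of C^4 = C^2 (+) C^2: indices 1,2 form the upper block, 3,4 the lower block.\<close>
definition lower_blk :: "4 \<Rightarrow> bool" where "lower_blk i \<longleftrightarrow> (i = 3 \<or> i = 4)"
definition sub_idx :: "4 \<Rightarrow> 2" where "sub_idx i = (if i = 1 \<or> i = 3 then 1 else 2)"

text \<open>alpha_k = ((0, sigma_k), (sigma_k, 0)).\<close>
definition alpha :: "3 \<Rightarrow> complex^4^4" where
  "alpha k = (\<chi> i j. if lower_blk i \<noteq> lower_blk j then pauli k $ sub_idx i $ sub_idx j else 0)"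

definition gamma_up :: "3 \<Rightarrow> complex^4^4" where
  "gamma_up k = gamma0 ** alpha k"

text \<open>eta_{aa} = -1 for spatial a; gamma_a = eta_{ab} gamma^b.\<close>
definition eta_sp :: real where "eta_sp = -1"

definition gamma_low :: "3 \<Rightarrow> complex^4^4" where
  "gamma_low a = eta_sp *\<^sub>R gamma_up a"

text \<open>f a i x = f_a^i(x).  h^{ij} = sum_a f_a^i f_a^j.\<close>
definition hinv :: "(3 \<Rightarrow> 3 \<Rightarrow> real^3 \<Rightarrow> real) \<Rightarrow> 3 \<Rightarrow> 3 \<Rightarrow> real^3 \<Rightarrow> real" where
  "hinv f i j x = (\<Sum>a\<in>UNIV. f a i x * f a j x)"

definition hlow :: "(3 \<Rightarrow> 3 \<Rightarrow> real^3 \<Rightarrow> real) \<Rightarrow> 3 \<Rightarrow> 3 \<Rightarrow> real^3 \<Rightarrow> real" where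
  "hlow f i j x = matrix_inv (\<chi> k l. hinv f k l x) $ i $ j"

definition chr :: "(3 \<Rightarrow> 3 \<Rightarrow> real^3 \<Rightarrow> real) \<Rightarrow> 3 \<Rightarrow> 3 \<Rightarrow> 3 \<Rightarrow> real^3 \<Rightarrow> real" where
  "chr f k i j x = (1/2) * (\<Sum>l\<in>UNIV. hinv f k l x *
      (pd i (hlow f l j) x + pd j (hlow f l i) x - pd l (hlow f i j) x))"

definition gsp :: "(3 \<Rightarrow> 3 \<Rightarrow> real^3 \<Rightarrow> real) \<Rightarrow> 3 \<Rightarrow> 3 \<Rightarrow> real^3 \<Rightarrow> real" where
  "gsp f j k x = - hlow f j k x"

text \<open>f^a_j = eta^{aa} g_{jk} f_a^k  (frame index raised by eta, coordinate index lowered by g).\<close>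
definition f_co :: "(3 \<Rightarrow> 3 \<Rightarrow> real^3 \<Rightarrow> real) \<Rightarrow> 3 \<Rightarrow> 3 \<Rightarrow> real^3 \<Rightarrow> real" where
  "f_co f a j x = eta_sp * (\<Sum>k\<in>UNIV. gsp f j k x * f a k x)"

definition f_up :: "(3 \<Rightarrow> 3 \<Rightarrow> real^3 \<Rightarrow> real) \<Rightarrow> 3 \<Rightarrow> 3 \<Rightarrow> real^3 \<Rightarrow> real" where
  "f_up f j b x = eta_sp * f b j x"

definition alpha_conn :: "(3 \<Rightarrow> 3 \<Rightarrow> real^3 \<Rightarrow> real) \<Rightarrow> 3 \<Rightarrow> 3 \<Rightarrow> 3 \<Rightarrow> real^3 \<Rightarrow> real" where
  "alpha_conn f i a b x =
     (\<Sum>j\<in>UNIV. f_co f a j x * pd i (f_up f j b) x)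
   + (\<Sum>j\<in>UNIV. \<Sum>k\<in>UNIV. f_co f a j x * chr f j i k x * f_up f k b x)"

definition Dsp :: "(3 \<Rightarrow> 3 \<Rightarrow> real^3 \<Rightarrow> real) \<Rightarrow> 3 \<Rightarrow> (real^3 \<Rightarrow> complex^4) \<Rightarrow> real^3 \<Rightarrow> complex^4" where
  "Dsp f j U x = pd j U x +
     (\<Sum>a\<in>UNIV. \<Sum>b\<in>UNIV. (alpha_conn f j a b x / 8) *\<^sub>R
        (gamma_low a ** gamma_low b - gamma_low b ** gamma_low a)) *v U x"

definition Hcal :: "(3 \<Rightarrow> 3 \<Rightarrow> real^3 \<Rightarrow> real) \<Rightarrow> (real^3 \<Rightarrow> complex^4) \<Rightarrow> real^3 \<Rightarrow> complex^4" where
  "Hcal f U x = \<i> *s (\<Sum>a\<in>UNIV. \<Sum>j\<in>UNIV. f a j x *\<^sub>R (gamma_up a *v Dsp f j U x))"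

definition Hop :: "(3 \<Rightarrow> 3 \<Rightarrow> real^3 \<Rightarrow> real) \<Rightarrow> real \<Rightarrow> (real^3 \<Rightarrow> complex^4) \<Rightarrow> real^3 \<Rightarrow> complex^4" where
  "Hop f m U x = - (gamma0 *v (Hcal f U x + complex_of_real m *s U x))"

text \<open>Laplace-Beltrami operator of h acting on spinor fields (covariant, via D):
  Delta_h U = h^{ij} (D_i D_j U - Lambda^k_{ij} D_k U).\<close>
definition lap :: "(3 \<Rightarrow> 3 \<Rightarrow> real^3 \<Rightarrow> real) \<Rightarrow> (real^3 \<Rightarrow> complex^4) \<Rightarrow> real^3 \<Rightarrow> complex^4" where
  "lap f U x = (\<Sum>i\<in>UNIV. \<Sum>j\<in>UNIV. hinv f i j x *\<^sub>R
      (Dsp f i (Dsp f j U) x - (\<Sum>k\<in>UNIV. chr f k i j x *\<^sub>R Dsp f k U x)))"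

text \<open>Ricci tensor R_{ij} = d_k Lambda^k_{ij} - d_j Lambda^k_{ik} + Lambda^k_{kl} Lambda^l_{ij} - Lambda^k_{jl} Lambda^l_{ik}
  and scalar curvature R_h = h^{ij} R_{ij} (positive on round spheres).\<close>
definition ricci :: "(3 \<Rightarrow> 3 \<Rightarrow> real^3 \<Rightarrow> real) \<Rightarrow> 3 \<Rightarrow> 3 \<Rightarrow> real^3 \<Rightarrow> real" where
  "ricci f i j x = (\<Sum>k\<in>UNIV. pd k (chr f k i j) x - pd j (chr f k i k) x
      + (\<Sum>l\<in>UNIV. chr f k k l x * chr f l i j x - chr f k j l x * chr f l i k x))"

definition scal :: "(3 \<Rightarrow> 3 \<Rightarrow> real^3 \<Rightarrow> real) \<Rightarrow> real^3 \<Rightarrow> real" where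
  "scal f x = (\<Sum>i\<in>UNIV. \<Sum>j\<in>UNIV. hinv f i j x * ricci f i j x)"

end

theory Submission
  imports Defs
begin

definition D1 :: "(real^3) set \<Rightarrow> (real^3 \<Rightarrow> 'b::real_normed_vector) \<Rightarrow> bool" where
  "D1 S F \<longleftrightarrow> (\<forall>x\<in>S. \<forall>i. ((\<lambda>s. F (x + s *\<^sub>R axis i 1)) has_vector_derivative pd i F x) (at 0))"

lemma pd_eq: "((\<lambda>s. F (x + s *\<^sub>R axis i 1)) has_vector_derivative D) (at 0) \<Longrightarrow> pd i F x = D"
  unfolding pd_def dpart_def by (rule vector_derivative_at)

lemma D1I: "(\<And>x i. x\<in>S \<Longrightarrow> \<exists>D. ((\<lambda>s. F (x + s *\<^sub>R axis i 1)) has_vector_derivative D) (at 0)) \<Longrightarrow> D1 S F"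
  unfolding D1_def using pd_eq by metis

lemma D1D: "D1 S F \<Longrightarrow> x \<in> S \<Longrightarrow> ((\<lambda>s. F (x + s *\<^sub>R axis i 1)) has_vector_derivative pd i F x) (at 0)"
  unfolding D1_def by blast

lemma pd_local:
  assumes "open S" "x \<in> S" "\<And>y. y \<in> S \<Longrightarrow> F y = G y"
  shows "pd i F x = pd i G x"
proof -
  have o: "open {s::real. x + s *\<^sub>R axis i 1 \<in> S}"
    using continuous_open_vimage[OF assms(1), of "\<lambda>s::real. x + s *\<^sub>R axis i 1"]
    by (simp add: vimage_def continuous_intros)
  have "eventually (\<lambda>s. s \<in> UNIV \<longrightarrow> F (x + s *\<^sub>R axis i 1) = G (x + s *\<^sub>R axis i 1)) (nhds (0::real))"
    using o assms(2,3) unfolding eventually_nhds by (intro exI[of _ "{s::real. x + s *\<^sub>R axis i 1 \<in> S}"]) auto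
  then show ?thesis unfolding pd_def dpart_def
    by (intro vector_derivative_cong_eq) auto
qed

lemma D1_local:
  assumes "open S" "D1 S F" "\<And>y. y \<in> S \<Longrightarrow> F y = G y"
  shows "D1 S G"
proof (rule D1I)
  fix x i assume x: "x \<in> S"
  have o: "open {s::real. x + s *\<^sub>R axis i 1 \<in> S}"
    using continuous_open_vimage[OF assms(1), of "\<lambda>s::real. x + s *\<^sub>R axis i 1"]
    by (simp add: vimage_def continuous_intros)
  have "((\<lambda>s. G (x + s *\<^sub>R axis i 1)) has_vector_derivative pd i F x) (at 0)"
    by (rule has_vector_derivative_transform_within_open[OF D1D[OF assms(2) x] o]) (use x assms(3) in auto)
  then show "\<exists>D. ((\<lambda>s. G (x + s *\<^sub>R axis i 1)) has_vector_derivative D) (at 0)" by blast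
qed

lemma D1_bil:
  assumes P: "bounded_bilinear P" and F: "D1 S F" and G: "D1 S G"
  shows "D1 S (\<lambda>x. P (F x) (G x))"
    and "x \<in> S \<Longrightarrow> pd i (\<lambda>x. P (F x) (G x)) x = P (F x) (pd i G x) + P (pd i F x) (G x)"
proof -
  have *: "((\<lambda>s. P (F (x + s *\<^sub>R axis i 1)) (G (x + s *\<^sub>R axis i 1))) has_vector_derivative
     P (F x) (pd i G x) + P (pd i F x) (G x)) (at 0)" if "x \<in> S" for x i
    using bounded_bilinear.has_vector_derivative[OF P D1D[OF F that, of i] D1D[OF G that, of i]] by simp
  show "D1 S (\<lambda>x. P (F x) (G x))" using * by (intro D1I) blast
  show "x \<in> S \<Longrightarrow> pd i (\<lambda>x. P (F x) (G x)) x = P (F x) (pd i G x) + P (pd i F x) (G x)"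
    using * by (intro pd_eq)
qed

lemma D1_lin:
  assumes L: "bounded_linear L" and F: "D1 S F"
  shows "D1 S (\<lambda>x. L (F x))"
    and "x \<in> S \<Longrightarrow> pd i (\<lambda>x. L (F x)) x = L (pd i F x)"
proof -
  have *: "((\<lambda>s. L (F (x + s *\<^sub>R axis i 1))) has_vector_derivative L (pd i F x)) (at 0)" if "x \<in> S" for x i
    using bounded_linear.has_vector_derivative[OF L D1D[OF F that, of i]] by simp
  show "D1 S (\<lambda>x. L (F x))" using * by (intro D1I) blast
  show "x \<in> S \<Longrightarrow> pd i (\<lambda>x. L (F x)) x = L (pd i F x)" using * by (intro pd_eq)
qed

lemma D1_const: "D1 S (\<lambda>x. c)" and pd_const: "pd i (\<lambda>x. c) x = 0"
proof -
  show "D1 S (\<lambda>x. c)" by (intro D1I) (auto intro!: derivative_eq_intros)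
  show "pd i (\<lambda>x. c) x = 0" by (rule pd_eq) (auto intro!: derivative_eq_intros)
qed

lemma D1_add:
  assumes F: "D1 S F" and G: "D1 S G"
  shows "D1 S (\<lambda>x. F x + G x)" and "x \<in> S \<Longrightarrow> pd i (\<lambda>x. F x + G x) x = pd i F x + pd i G x"
proof -
  have *: "((\<lambda>s. F (x + s *\<^sub>R axis i 1) + G (x + s *\<^sub>R axis i 1)) has_vector_derivative pd i F x + pd i G x) (at 0)" if "x \<in> S" for x i
    using has_vector_derivative_add[OF D1D[OF F that, of i] D1D[OF G that, of i]] .
  show "D1 S (\<lambda>x. F x + G x)" using * by (intro D1I) blast
  show "x \<in> S \<Longrightarrow> pd i (\<lambda>x. F x + G x) x = pd i F x + pd i G x" using * by (intro pd_eq)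
qed

lemma D1_diff:
  assumes F: "D1 S F" and G: "D1 S G"
  shows "D1 S (\<lambda>x. F x - G x)" and "x \<in> S \<Longrightarrow> pd i (\<lambda>x. F x - G x) x = pd i F x - pd i G x"
proof -
  have *: "((\<lambda>s. F (x + s *\<^sub>R axis i 1) - G (x + s *\<^sub>R axis i 1)) has_vector_derivative pd i F x - pd i G x) (at 0)" if "x \<in> S" for x i
    using has_vector_derivative_diff[OF D1D[OF F that, of i] D1D[OF G that, of i]] .
  show "D1 S (\<lambda>x. F x - G x)" using * by (intro D1I) blast
  show "x \<in> S \<Longrightarrow> pd i (\<lambda>x. F x - G x) x = pd i F x - pd i G x" using * by (intro pd_eq)
qed

lemma D1_minus:
  assumes F: "D1 S F"
  shows "D1 S (\<lambda>x. - F x)" and "x \<in> S \<Longrightarrow> pd i (\<lambda>x. - F x) x = - pd i F x"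
proof -
  have *: "((\<lambda>s. - F (x + s *\<^sub>R axis i 1)) has_vector_derivative - pd i F x) (at 0)" if "x \<in> S" for x i
    using has_vector_derivative_minus[OF D1D[OF F that, of i]] .
  show "D1 S (\<lambda>x. - F x)" using * by (intro D1I) blast
  show "x \<in> S \<Longrightarrow> pd i (\<lambda>x. - F x) x = - pd i F x" using * by (intro pd_eq)
qed

lemma D1_sum:
  assumes "finite A" "\<And>a. a \<in> A \<Longrightarrow> D1 S (F a)"
  shows "D1 S (\<lambda>x. \<Sum>a\<in>A. F a x)" and "x \<in> S \<Longrightarrow> pd i (\<lambda>x. \<Sum>a\<in>A. F a x) x = (\<Sum>a\<in>A. pd i (F a) x)"
proof -
  have *: "((\<lambda>s. \<Sum>a\<in>A. F a (x + s *\<^sub>R axis i 1)) has_vector_derivative (\<Sum>a\<in>A. pd i (F a) x)) (at 0)" if "x \<in> S" for x i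
    by (rule has_vector_derivative_sum) (use D1D[OF assms(2) that] in auto)
  show "D1 S (\<lambda>x. \<Sum>a\<in>A. F a x)" using * by (intro D1I) blast
  show "x \<in> S \<Longrightarrow> pd i (\<lambda>x. \<Sum>a\<in>A. F a x) x = (\<Sum>a\<in>A. pd i (F a) x)" using * by (intro pd_eq)
qed

lemma sR_cx: "c *\<^sub>R (z::complex) = complex_of_real c * z"
  by (simp add: scaleR_conv_of_real)

lemma bil_mv: "bounded_bilinear (\<lambda>(A::complex^4^4) (v::complex^4). A *v v)"
  unfolding bilinear_conv_bounded_bilinear[symmetric] bilinear_def
  by (auto simp: linear_iff matrix_vector_mult_def vec_eq_iff sum.distrib sum_distrib_left algebra_simps vector_scaleR_component sR_cx)

lemma bil_mm: "bounded_bilinear (\<lambda>(A::complex^4^4) (B::complex^4^4). A ** B)"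
  unfolding bilinear_conv_bounded_bilinear[symmetric] bilinear_def
  by (auto simp: linear_iff matrix_matrix_mult_def vec_eq_iff sum.distrib sum_distrib_left algebra_simps vector_scaleR_component sR_cx)

lemma bil_sR: "bounded_bilinear (\<lambda>(a::real) (v::'a::real_normed_vector). a *\<^sub>R v)"
  by (rule bounded_bilinear_scaleR)

lemma bil_mult: "bounded_bilinear (\<lambda>(a::real) (b::real). a * b)"
  by (rule bounded_bilinear_mult)

lemma lin_smult: "bounded_linear (\<lambda>(v::complex^4). c *s v)"
  unfolding linear_conv_bounded_linear[symmetric]
  by (auto simp: linear_iff vec_eq_iff algebra_simps vector_scaleR_component sR_cx)

lemma lin_mv: "bounded_linear (\<lambda>(v::complex^4). A *v v)" for A :: "complex^4^4"
  by simp

lemma deriv_shift_line: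
  fixes G :: "'a::real_normed_vector \<Rightarrow> real"
  assumes "\<And>y. y\<in>S \<Longrightarrow> ((\<lambda>s. G (y + s *\<^sub>R v)) has_real_derivative G' y) (at 0)" "y + s0 *\<^sub>R v \<in> S"
  shows "((\<lambda>s. G (y + s *\<^sub>R v)) has_real_derivative G' (y + s0 *\<^sub>R v)) (at s0)"
proof -
  have "((\<lambda>\<sigma>. G ((y + s0 *\<^sub>R v) + \<sigma> *\<^sub>R v)) has_real_derivative G'(y + s0 *\<^sub>R v)) (at 0)"
    using assms by blast
  moreover have "(\<lambda>\<sigma>. G ((y + s0 *\<^sub>R v) + \<sigma> *\<^sub>R v)) = (\<lambda>\<sigma>. (\<lambda>s. G (y + s *\<^sub>R v)) (\<sigma> + s0))"
    by (auto simp: algebra_simps)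
  ultimately show ?thesis using DERIV_shift[of "\<lambda>s. G(y + s *\<^sub>R v)" _ 0 s0] by simp
qed

lemma mixed_mvt:
  fixes F Fv Fvw :: "'a::real_normed_vector \<Rightarrow> real"
  assumes dv: "\<And>y. y\<in>S \<Longrightarrow> ((\<lambda>s. F (y + s *\<^sub>R v)) has_real_derivative Fv y) (at 0)"
    and dvw: "\<And>y. y\<in>S \<Longrightarrow> ((\<lambda>s. Fv (y + s *\<^sub>R w)) has_real_derivative Fvw y) (at 0)"
    and h: "h > 0"
    and sub: "\<And>s r. 0\<le>s \<Longrightarrow> s\<le>h \<Longrightarrow> 0\<le>r \<Longrightarrow> r\<le>h \<Longrightarrow> x + s *\<^sub>R v + r *\<^sub>R w \<in> S"
  shows "\<exists>\<xi> \<eta>. 0<\<xi> \<and> \<xi><h \<and> 0<\<eta> \<and> \<eta><h \<and>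
    F (x + h *\<^sub>R v + h *\<^sub>R w) - F (x + h *\<^sub>R v) - F (x + h *\<^sub>R w) + F x = h*h*Fvw (x + \<xi> *\<^sub>R v + \<eta> *\<^sub>R w)"
proof -
  have dd: "DERIV (\<lambda>s. F ((x + h *\<^sub>R w) + s *\<^sub>R v) - F (x + s *\<^sub>R v)) s :>
      (Fv ((x + h *\<^sub>R w) + s *\<^sub>R v) - Fv (x + s *\<^sub>R v))" if "0 \<le> s" "s \<le> h" for s
  proof -
    have m1: "x + h *\<^sub>R w + s *\<^sub>R v \<in> S"
    proof -
      have e: "x + h *\<^sub>R w + s *\<^sub>R v = x + s *\<^sub>R v + h *\<^sub>R w" by (simp add: add_ac)
      show ?thesis unfolding e using sub[of s h] that h by simp
    qed
    have m2: "x + s *\<^sub>R v \<in> S" using sub[of s 0] that h by simp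
    have A: "DERIV (\<lambda>s. F ((x + h *\<^sub>R w) + s *\<^sub>R v)) s :> Fv ((x + h *\<^sub>R w) + s *\<^sub>R v)"
      by (rule deriv_shift_line[where S=S, OF dv m1])
    have B: "DERIV (\<lambda>s. F (x + s *\<^sub>R v)) s :> Fv (x + s *\<^sub>R v)"
      by (rule deriv_shift_line[where S=S, OF dv m2])
    show ?thesis by (rule DERIV_diff[OF A B])
  qed
  obtain \<xi> where \<xi>: "0 < \<xi>" "\<xi> < h"
    "(F ((x + h *\<^sub>R w) + h *\<^sub>R v) - F (x + h *\<^sub>R v)) - (F ((x + h *\<^sub>R w) + 0 *\<^sub>R v) - F (x + 0 *\<^sub>R v))
     = (h - 0) * (Fv ((x + h *\<^sub>R w) + \<xi> *\<^sub>R v) - Fv (x + \<xi> *\<^sub>R v))"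
    using MVT2[OF h, of "\<lambda>s. F ((x + h *\<^sub>R w) + s *\<^sub>R v) - F (x + s *\<^sub>R v)"
        "\<lambda>s. Fv ((x + h *\<^sub>R w) + s *\<^sub>R v) - Fv (x + s *\<^sub>R v)"] dd by blast
  have ee: "DERIV (\<lambda>r. Fv ((x + \<xi> *\<^sub>R v) + r *\<^sub>R w)) r :> Fvw ((x + \<xi> *\<^sub>R v) + r *\<^sub>R w)" if "0 \<le> r" "r \<le> h" for r
  proof -
    have "x + \<xi> *\<^sub>R v + r *\<^sub>R w \<in> S" using sub[of \<xi> r] that \<xi> by simp
    from deriv_shift_line[where S=S, OF dvw this] show ?thesis by simp
  qed
  obtain \<eta> where \<eta>: "0 < \<eta>" "\<eta> < h"
    "Fv ((x + \<xi> *\<^sub>R v) + h *\<^sub>R w) - Fv ((x + \<xi> *\<^sub>R v) + 0 *\<^sub>R w) = (h - 0) * Fvw ((x + \<xi> *\<^sub>R v) + \<eta> *\<^sub>R w)"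
    using MVT2[OF h, of "\<lambda>r. Fv ((x + \<xi> *\<^sub>R v) + r *\<^sub>R w)" "\<lambda>r. Fvw ((x + \<xi> *\<^sub>R v) + r *\<^sub>R w)"] ee by blast
  have e1: "x + h *\<^sub>R w + h *\<^sub>R v = x + h *\<^sub>R v + h *\<^sub>R w" by (simp add: add_ac)
  have e2: "x + h *\<^sub>R w + \<xi> *\<^sub>R v = x + \<xi> *\<^sub>R v + h *\<^sub>R w" by (simp add: add_ac)
  have "F (x + h *\<^sub>R v + h *\<^sub>R w) - F (x + h *\<^sub>R v) - F (x + h *\<^sub>R w) + F x
      = h * (Fv (x + \<xi> *\<^sub>R v + h *\<^sub>R w) - Fv (x + \<xi> *\<^sub>R v))"
    using \<xi>(3) unfolding e1 e2 by simp
  also have "\<dots> = h*h*Fvw (x + \<xi> *\<^sub>R v + \<eta> *\<^sub>R w)" using \<eta>(3) by simp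
  finally show ?thesis using \<xi> \<eta> by blast
qed

lemma schwarz_real:
  fixes F Fv Fw Fvw Fwv :: "'a::real_normed_vector \<Rightarrow> real"
  assumes S: "open S" "x \<in> S"
    and dv: "\<And>y. y\<in>S \<Longrightarrow> ((\<lambda>s. F (y + s *\<^sub>R v)) has_real_derivative Fv y) (at 0)"
    and dw: "\<And>y. y\<in>S \<Longrightarrow> ((\<lambda>s. F (y + s *\<^sub>R w)) has_real_derivative Fw y) (at 0)"
    and dvw: "\<And>y. y\<in>S \<Longrightarrow> ((\<lambda>s. Fv (y + s *\<^sub>R w)) has_real_derivative Fvw y) (at 0)"
    and dwv: "\<And>y. y\<in>S \<Longrightarrow> ((\<lambda>s. Fw (y + s *\<^sub>R v)) has_real_derivative Fwv y) (at 0)"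
    and c1: "continuous_on S Fvw" and c2: "continuous_on S Fwv"
  shows "Fvw x = Fwv x"
proof (rule ccontr)
  assume ne: "Fvw x \<noteq> Fwv x"
  define e where "e = \<bar>Fvw x - Fwv x\<bar> / 2"
  have e: "e > 0" using ne by (simp add: e_def)
  obtain d1 where d1: "d1 > 0" "\<And>y. y \<in> S \<Longrightarrow> dist y x < d1 \<Longrightarrow> dist (Fvw y) (Fvw x) < e"
    using c1 S(2) e unfolding continuous_on_iff by blast
  obtain d2 where d2: "d2 > 0" "\<And>y. y \<in> S \<Longrightarrow> dist y x < d2 \<Longrightarrow> dist (Fwv y) (Fwv x) < e"
    using c2 S(2) e unfolding continuous_on_iff by blast
  obtain d3 where d3: "d3 > 0" "ball x d3 \<subseteq> S" using S openE by blast
  define d where "d = min d1 (min d2 d3)"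
  have d: "d > 0" "d \<le> d1" "d \<le> d2" "d \<le> d3" using d1 d2 d3 by (auto simp: d_def)
  define h where "h = d / (2 * (norm v + norm w + 1))"
  have den: "norm v + norm w + 1 > 0" using norm_ge_zero[of v] norm_ge_zero[of w] by linarith
  have hpos: "h > 0" using d den by (simp add: h_def)
  have hb: "h * (norm v + norm w) < d"
  proof -
    have "h * (norm v + norm w) \<le> h * (norm v + norm w + 1)" using hpos by simp
    also have "\<dots> = d / 2" unfolding h_def using den by (simp add: field_simps)
    finally show ?thesis using d by simp
  qed
  have close: "dist (x + s *\<^sub>R v + r *\<^sub>R w) x < d" if "0\<le>s" "s\<le>h" "0\<le>r" "r\<le>h" for s r
  proof -
    have "dist (x + s *\<^sub>R v + r *\<^sub>R w) x = norm (s *\<^sub>R v + r *\<^sub>R w)" by (simp add: dist_norm)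
    also have "\<dots> \<le> norm (s *\<^sub>R v) + norm (r *\<^sub>R w)" by (rule norm_triangle_ineq)
    also have "\<dots> = s * norm v + r * norm w" using that by simp
    also have "\<dots> \<le> h * norm v + h * norm w" using that by (intro add_mono mult_right_mono) auto
    finally show ?thesis using hb by (simp add: distrib_left)
  qed
  have sub: "x + s *\<^sub>R v + r *\<^sub>R w \<in> S" if "0\<le>s" "s\<le>h" "0\<le>r" "r\<le>h" for s r
  proof -
    have "x + s *\<^sub>R v + r *\<^sub>R w \<in> ball x d3" unfolding mem_ball
      using close[OF that] d by (simp add: dist_commute)
    then show ?thesis using d3(2) by blast
  qed
  have sub': "x + s *\<^sub>R w + r *\<^sub>R v \<in> S" if "0\<le>s" "s\<le>h" "0\<le>r" "r\<le>h" for s r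
  proof -
    have e: "x + s *\<^sub>R w + r *\<^sub>R v = x + r *\<^sub>R v + s *\<^sub>R w" by (simp add: add_ac)
    show ?thesis unfolding e using sub[of r s] that by simp
  qed
  have close': "dist (x + s *\<^sub>R w + r *\<^sub>R v) x < d" if "0\<le>s" "s\<le>h" "0\<le>r" "r\<le>h" for s r
  proof -
    have e: "x + s *\<^sub>R w + r *\<^sub>R v = x + r *\<^sub>R v + s *\<^sub>R w" by (simp add: add_ac)
    show ?thesis unfolding e using close[of r s] that by simp
  qed
  obtain \<xi> \<eta> where A: "0<\<xi>" "\<xi><h" "0<\<eta>" "\<eta><h"
    "F (x + h *\<^sub>R v + h *\<^sub>R w) - F (x + h *\<^sub>R v) - F (x + h *\<^sub>R w) + F x = h*h*Fvw (x + \<xi> *\<^sub>R v + \<eta> *\<^sub>R w)"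
    using mixed_mvt[OF dv dvw hpos sub] by blast
  obtain \<xi>' \<eta>' where B: "0<\<xi>'" "\<xi>'<h" "0<\<eta>'" "\<eta>'<h"
    "F (x + h *\<^sub>R w + h *\<^sub>R v) - F (x + h *\<^sub>R w) - F (x + h *\<^sub>R v) + F x = h*h*Fwv (x + \<xi>' *\<^sub>R w + \<eta>' *\<^sub>R v)"
    using mixed_mvt[OF dw dwv hpos sub'] by blast
  have "h*h*Fvw (x + \<xi> *\<^sub>R v + \<eta> *\<^sub>R w) = h*h*Fwv (x + \<xi>' *\<^sub>R w + \<eta>' *\<^sub>R v)"
    using A(5) B(5) by (simp add: algebra_simps)
  then have eq: "Fvw (x + \<xi> *\<^sub>R v + \<eta> *\<^sub>R w) = Fwv (x + \<xi>' *\<^sub>R w + \<eta>' *\<^sub>R v)" using hpos by simp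
  have "dist (Fvw (x + \<xi> *\<^sub>R v + \<eta> *\<^sub>R w)) (Fvw x) < e"
    using d1(2)[OF sub[of \<xi> \<eta>]] close[of \<xi> \<eta>] A d(2) by simp
  moreover have "dist (Fwv (x + \<xi>' *\<^sub>R w + \<eta>' *\<^sub>R v)) (Fwv x) < e"
    using d2(2)[OF sub'[of \<xi>' \<eta>']] close'[of \<xi>' \<eta>'] B d(3) by simp
  ultimately have "\<bar>Fvw x - Fwv x\<bar> < 2 * e" using eq by (simp add: dist_real_def)
  then show False by (simp add: e_def)
qed

lemma hvd_shift:
  fixes g :: "real \<Rightarrow> 'b::real_normed_vector"
  shows "((\<lambda>s. g (t + s)) has_vector_derivative D) (at 0) \<longleftrightarrow> (g has_vector_derivative D) (at t)"
proof
  assume A: "((\<lambda>s. g (t + s)) has_vector_derivative D) (at 0)"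
  have i: "((\<lambda>\<sigma>::real. \<sigma> - t) has_vector_derivative 1) (at t)" by (auto intro!: derivative_eq_intros)
  have "(((\<lambda>s. g (t + s)) \<circ> (\<lambda>\<sigma>. \<sigma> - t)) has_vector_derivative (1 *\<^sub>R D)) (at t)"
    by (rule vector_diff_chain_at[OF i]) (use A in simp)
  moreover have "((\<lambda>s. g (t + s)) \<circ> (\<lambda>\<sigma>. \<sigma> - t)) = g" by (auto simp: o_def)
  ultimately show "(g has_vector_derivative D) (at t)" by simp
next
  assume A: "(g has_vector_derivative D) (at t)"
  have i: "((\<lambda>s::real. t + s) has_vector_derivative 1) (at 0)" by (auto intro!: derivative_eq_intros)
  have "((g \<circ> (\<lambda>s. t + s)) has_vector_derivative (1 *\<^sub>R D)) (at 0)"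
    by (rule vector_diff_chain_at[OF i]) (use A in simp)
  then show "((\<lambda>s. g (t + s)) has_vector_derivative D) (at 0)" by (simp add: o_def)
qed

lemma vd_shift: "vector_derivative (\<lambda>s. g (t + s)) (at 0) = vector_derivative g (at t)"
  unfolding vector_derivative_def using hvd_shift[of g t] by simp

lemma smooth_deriv:
  "smooth_on S F \<Longrightarrow> set vs \<subseteq> Basis \<Longrightarrow> v\<in>Basis \<Longrightarrow> x\<in>S \<Longrightarrow>
   ((\<lambda>s. iter_dpart vs F (x + s *\<^sub>R v)) has_vector_derivative dpart v (iter_dpart vs F) x) (at 0)"
  unfolding smooth_on_def by blast

lemma smooth_cont: "smooth_on S F \<Longrightarrow> set vs \<subseteq> Basis \<Longrightarrow> continuous_on S (iter_dpart vs F)"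
  unfolding smooth_on_def by blast

lemma hvd_inner:
  "(g has_vector_derivative D) F \<Longrightarrow> ((\<lambda>s. g s \<bullet> b) has_real_derivative (D \<bullet> b)) F"
  unfolding has_real_derivative_iff_has_vector_derivative
  by (rule bounded_linear.has_vector_derivative[OF bounded_linear_inner_left])

lemma smooth_schwarz:
  fixes F :: "'a::euclidean_space \<Rightarrow> 'b::euclidean_space"
  assumes S: "open S" "smooth_on S F" "x \<in> S" and v: "v \<in> Basis" and w: "w \<in> Basis"
  shows "dpart w (dpart v F) x = dpart v (dpart w F) x"
proof (rule euclidean_eqI)
  fix b :: 'b assume b: "b \<in> Basis"
  have d0: "((\<lambda>s. F (y + s *\<^sub>R u)) has_vector_derivative dpart u F y) (at 0)" if "y \<in> S" "u \<in> Basis" for y u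
    using smooth_deriv[OF S(2), of "[]" u y] that by simp
  have d1: "((\<lambda>s. dpart u F (y + s *\<^sub>R u')) has_vector_derivative dpart u' (dpart u F) y) (at 0)"
    if "y \<in> S" "u \<in> Basis" "u' \<in> Basis" for y u u'
    using smooth_deriv[OF S(2), of "[u]" u' y] that by simp
  have c: "continuous_on S (dpart u' (dpart u F))" if "u \<in> Basis" "u' \<in> Basis" for u u'
    using smooth_cont[OF S(2), of "[u',u]"] that by simp
  have ci: "continuous_on S (\<lambda>y. dpart u' (dpart u F) y \<bullet> b)" if "u \<in> Basis" "u' \<in> Basis" for u u'
    using c[OF that] by (intro continuous_intros) (simp_all add: continuous_on_eq_continuous_within)
  show "dpart w (dpart v F) x \<bullet> b = dpart v (dpart w F) x \<bullet> b"
    by (rule schwarz_real[OF S(1) S(3), where F="\<lambda>y. F y \<bullet> b" and v=v and w=w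
         and Fv="\<lambda>y. dpart v F y \<bullet> b" and Fw="\<lambda>y. dpart w F y \<bullet> b"
         and Fvw="\<lambda>y. dpart w (dpart v F) y \<bullet> b" and Fwv="\<lambda>y. dpart v (dpart w F) y \<bullet> b"])
       (use hvd_inner[OF d0] hvd_inner[OF d1] v w ci in auto)
qed

lemma pd_fun: "pd i F = dpart (axis i 1) F"
  by (rule ext) (simp add: pd_def)

lemma axis_Basis: "axis i (1::real) \<in> Basis"
  by simp

lemma smooth_D1:
  fixes F :: "real^3 \<Rightarrow> 'b::euclidean_space"
  assumes "smooth_on S F"
  shows "D1 S F" and "D1 S (pd j F)"
proof -
  show "D1 S F" unfolding D1_def pd_def using smooth_deriv[OF assms, of "[]"] by simp
  show "D1 S (pd j F)" unfolding D1_def pd_fun using smooth_deriv[OF assms, of "[axis j 1]"] by (simp add: pd_def)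
qed

lemma smooth_pd_schwarz:
  fixes F :: "real^3 \<Rightarrow> 'b::euclidean_space"
  assumes "open S" "smooth_on S F" "x \<in> S"
  shows "pd i (pd j F) x = pd j (pd i F) x"
  unfolding pd_fun using smooth_schwarz[OF assms, of "axis j 1" "axis i 1"] by simp

lemma slice:
  "iter_dpart (map (\<lambda>v. (0::real, v)) vs) (\<lambda>(t,x). u t x) (t, x) = iter_dpart vs (u t) x"
proof (induction vs arbitrary: t x)
  case Nil then show ?case by simp
next
  case (Cons v vs)
  have "iter_dpart (map (\<lambda>v. (0::real, v)) (v # vs)) (\<lambda>(t,x). u t x) (t, x)
     = vector_derivative (\<lambda>s. iter_dpart (map (\<lambda>v. (0::real, v)) vs) (\<lambda>(t,x). u t x) (t, x + s *\<^sub>R v)) (at 0)"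
    by (simp add: dpart_def)
  also have "\<dots> = vector_derivative (\<lambda>s. iter_dpart vs (u t) (x + s *\<^sub>R v)) (at 0)"
    using Cons.IH by simp
  finally show ?case by (simp add: dpart_def)
qed

lemma slice_t: "dpart (1::real, 0::real^3) (\<lambda>(t,x). u t x) (t, x) = dt u t x"
  unfolding dpart_def dt_def by (simp add: vd_shift[of "\<lambda>s. u s x" t])

lemma Basis_t: "(1::real, 0::real^3) \<in> Basis"
  by (simp add: Basis_prod_def)

lemma Basis_x: "(0::real, axis i (1::real)) \<in> Basis"
  by (simp add: Basis_prod_def)

lemma vector_4 [simp]:
 "(vector [x,y,z,w] ::('a::zero)^4)$1 = x"
 "(vector [x,y,z,w] ::('a::zero)^4)$2 = y"
 "(vector [x,y,z,w] ::('a::zero)^4)$3 = z"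
 "(vector [x,y,z,w] ::('a::zero)^4)$4 = w"
  unfolding vector_def by simp_all

lemma ex4: "(\<forall>i::4. P i) \<longleftrightarrow> P 1 \<and> P 2 \<and> P 3 \<and> P 4" by (rule forall_4)

definition G1 :: "complex^4^4" where
  "G1 = vector [vector [0,0,0,1], vector [0,0,1,0], vector [0,-1,0,0], vector [-1,0,0,0]]"
definition G2 :: "complex^4^4" where
  "G2 = vector [vector [0,0,0,-\<i>], vector [0,0,\<i>,0], vector [0,\<i>,0,0], vector [-\<i>,0,0,0]]"
definition G3 :: "complex^4^4" where
  "G3 = vector [vector [0,0,1,0], vector [0,0,0,-1], vector [-1,0,0,0], vector [0,1,0,0]]"

lemma mat_eq4: "(A::complex^4^4) = B \<longleftrightarrow> (\<forall>i j. A$i$j = B$i$j)"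
  by (simp add: vec_eq_iff)

lemma gamma_up_1: "gamma_up 1 = G1"
  unfolding gamma_up_def gamma0_def alpha_def G1_def pauli_def lower_blk_def sub_idx_def mat_eq4
  by (simp add: forall_4 matrix_matrix_mult_def sum_4)

lemma gamma_up_2: "gamma_up 2 = G2"
  unfolding gamma_up_def gamma0_def alpha_def G2_def pauli_def lower_blk_def sub_idx_def mat_eq4
  by (simp add: forall_4 matrix_matrix_mult_def sum_4)

lemma gamma_up_3: "gamma_up 3 = G3"
  unfolding gamma_up_def gamma0_def alpha_def G3_def pauli_def lower_blk_def sub_idx_def mat_eq4
  by (simp add: forall_4 matrix_matrix_mult_def sum_4)

lemma gamma_low_up: "gamma_low a = - gamma_up a"
  by (simp add: gamma_low_def eta_sp_def)

definition Cm :: "3 \<Rightarrow> 3 \<Rightarrow> complex^4^4" where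
  "Cm a b = gamma_low a ** gamma_low b - gamma_low b ** gamma_low a"

lemma neg_mm: "(- A) ** (- B) = (A::complex^4^4) ** B"
  by (simp add: mat_eq4 matrix_matrix_mult_def)

lemma Cm_up: "Cm a b = gamma_up a ** gamma_up b - gamma_up b ** gamma_up a"
  by (simp add: Cm_def gamma_low_up neg_mm)

lemma P_1_1: "gamma_up 1 ** gamma_up 1 = vector [vector [-1,0,0,0], vector [0,-1,0,0], vector [0,0,-1,0], vector [0,0,0,-1]]"
  unfolding gamma_up_1 gamma_up_1 G1_def G2_def G3_def mat_eq4 by (simp add: forall_4 matrix_matrix_mult_def sum_4)

lemma P_1_2: "gamma_up 1 ** gamma_up 2 = vector [vector [-\<i>,0,0,0], vector [0,\<i>,0,0], vector [0,0,-\<i>,0], vector [0,0,0,\<i>]]"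
  unfolding gamma_up_1 gamma_up_2 G1_def G2_def G3_def mat_eq4 by (simp add: forall_4 matrix_matrix_mult_def sum_4)

lemma P_1_3: "gamma_up 1 ** gamma_up 3 = vector [vector [0,1,0,0], vector [-1,0,0,0], vector [0,0,0,1], vector [0,0,-1,0]]"
  unfolding gamma_up_1 gamma_up_3 G1_def G2_def G3_def mat_eq4 by (simp add: forall_4 matrix_matrix_mult_def sum_4)

lemma P_2_1: "gamma_up 2 ** gamma_up 1 = vector [vector [\<i>,0,0,0], vector [0,-\<i>,0,0], vector [0,0,\<i>,0], vector [0,0,0,-\<i>]]"
  unfolding gamma_up_2 gamma_up_1 G1_def G2_def G3_def mat_eq4 by (simp add: forall_4 matrix_matrix_mult_def sum_4)

lemma P_2_2: "gamma_up 2 ** gamma_up 2 = vector [vector [-1,0,0,0], vector [0,-1,0,0], vector [0,0,-1,0], vector [0,0,0,-1]]"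
  unfolding gamma_up_2 gamma_up_2 G1_def G2_def G3_def mat_eq4 by (simp add: forall_4 matrix_matrix_mult_def sum_4)

lemma P_2_3: "gamma_up 2 ** gamma_up 3 = vector [vector [0,-\<i>,0,0], vector [-\<i>,0,0,0], vector [0,0,0,-\<i>], vector [0,0,-\<i>,0]]"
  unfolding gamma_up_2 gamma_up_3 G1_def G2_def G3_def mat_eq4 by (simp add: forall_4 matrix_matrix_mult_def sum_4)

lemma P_3_1: "gamma_up 3 ** gamma_up 1 = vector [vector [0,-1,0,0], vector [1,0,0,0], vector [0,0,0,-1], vector [0,0,1,0]]"
  unfolding gamma_up_3 gamma_up_1 G1_def G2_def G3_def mat_eq4 by (simp add: forall_4 matrix_matrix_mult_def sum_4)

lemma P_3_2: "gamma_up 3 ** gamma_up 2 = vector [vector [0,\<i>,0,0], vector [\<i>,0,0,0], vector [0,0,0,\<i>], vector [0,0,\<i>,0]]"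
  unfolding gamma_up_3 gamma_up_2 G1_def G2_def G3_def mat_eq4 by (simp add: forall_4 matrix_matrix_mult_def sum_4)

lemma P_3_3: "gamma_up 3 ** gamma_up 3 = vector [vector [-1,0,0,0], vector [0,-1,0,0], vector [0,0,-1,0], vector [0,0,0,-1]]"
  unfolding gamma_up_3 gamma_up_3 G1_def G2_def G3_def mat_eq4 by (simp add: forall_4 matrix_matrix_mult_def sum_4)

lemma C_1_1: "Cm 1 1 = vector [vector [0,0,0,0], vector [0,0,0,0], vector [0,0,0,0], vector [0,0,0,0]]"
  unfolding Cm_up P_1_1 P_1_1 mat_eq4 by (simp add: forall_4)

lemma C_1_2: "Cm 1 2 = vector [vector [-(2*\<i>),0,0,0], vector [0,2*\<i>,0,0], vector [0,0,-(2*\<i>),0], vector [0,0,0,2*\<i>]]"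
  unfolding Cm_up P_1_2 P_2_1 mat_eq4 by (simp add: forall_4)

lemma C_1_3: "Cm 1 3 = vector [vector [0,2,0,0], vector [-2,0,0,0], vector [0,0,0,2], vector [0,0,-2,0]]"
  unfolding Cm_up P_1_3 P_3_1 mat_eq4 by (simp add: forall_4)

lemma C_2_1: "Cm 2 1 = vector [vector [2*\<i>,0,0,0], vector [0,-(2*\<i>),0,0], vector [0,0,2*\<i>,0], vector [0,0,0,-(2*\<i>)]]"
  unfolding Cm_up P_2_1 P_1_2 mat_eq4 by (simp add: forall_4)

lemma C_2_2: "Cm 2 2 = vector [vector [0,0,0,0], vector [0,0,0,0], vector [0,0,0,0], vector [0,0,0,0]]"
  unfolding Cm_up P_2_2 P_2_2 mat_eq4 by (simp add: forall_4)

lemma C_2_3: "Cm 2 3 = vector [vector [0,-(2*\<i>),0,0], vector [-(2*\<i>),0,0,0], vector [0,0,0,-(2*\<i>)], vector [0,0,-(2*\<i>),0]]"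
  unfolding Cm_up P_2_3 P_3_2 mat_eq4 by (simp add: forall_4)

lemma C_3_1: "Cm 3 1 = vector [vector [0,-2,0,0], vector [2,0,0,0], vector [0,0,0,-2], vector [0,0,2,0]]"
  unfolding Cm_up P_3_1 P_1_3 mat_eq4 by (simp add: forall_4)

lemma C_3_2: "Cm 3 2 = vector [vector [0,2*\<i>,0,0], vector [2*\<i>,0,0,0], vector [0,0,0,2*\<i>], vector [0,0,2*\<i>,0]]"
  unfolding Cm_up P_3_2 P_2_3 mat_eq4 by (simp add: forall_4)

lemma C_3_3: "Cm 3 3 = vector [vector [0,0,0,0], vector [0,0,0,0], vector [0,0,0,0], vector [0,0,0,0]]"
  unfolding Cm_up P_3_3 P_3_3 mat_eq4 by (simp add: forall_4)


lemma anti: "gamma_up a ** gamma_up b + gamma_up b ** gamma_up a = (if a = b then -2 else 0) *\<^sub>R mat 1"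
  using exhaust_3[of a] exhaust_3[of b]
  by (auto simp: P_1_1 P_1_2 P_1_3 P_2_1 P_2_2 P_2_3 P_3_1 P_3_2 P_3_3 mat_eq4 forall_4 mat_def sR_cx)

lemma g0_sq: "gamma0 ** gamma0 = mat 1"
  unfolding gamma0_def mat_eq4 by (simp add: forall_4 matrix_matrix_mult_def sum_4 mat_def)

lemma g0_anti: "gamma0 ** gamma_up a = - (gamma_up a ** gamma0)"
  using exhaust_3[of a]
  by (auto simp: gamma_up_1 gamma_up_2 gamma_up_3 G1_def G2_def G3_def gamma0_def mat_eq4 forall_4 matrix_matrix_mult_def sum_4)

lemmas Clits = C_1_1 C_1_2 C_1_3 C_2_1 C_2_2 C_2_3 C_3_1 C_3_2 C_3_3
lemmas Glits = gamma_up_1 gamma_up_2 gamma_up_3 G1_def G2_def G3_def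

lemma comm_g: "(\<Sum>a\<in>UNIV. \<Sum>b\<in>UNIV. x a b *\<^sub>R Cm a b) ** gamma_up c - gamma_up c ** (\<Sum>a\<in>UNIV. \<Sum>b\<in>UNIV. x a b *\<^sub>R Cm a b)
   = (\<Sum>b\<in>UNIV. (4 * (x c b - x b c)) *\<^sub>R gamma_up b)"
  using exhaust_3[of c]
  by (auto simp: mat_eq4 forall_4 matrix_matrix_mult_def sum_3 sum_4 Clits Glits sR_cx algebra_simps)

lemmas Plits = P_1_1 P_1_2 P_1_3 P_2_1 P_2_2 P_2_3 P_3_1 P_3_2 P_3_3

lemma comm_CC:
  assumes xa: "\<And>a b. x a b = - x b a" and ya: "\<And>a b. y a b = - y b a"
  shows "(\<Sum>a\<in>UNIV. \<Sum>b\<in>UNIV. x a b *\<^sub>R Cm a b) ** (\<Sum>a\<in>UNIV. \<Sum>b\<in>UNIV. y a b *\<^sub>R Cm a b)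
       - (\<Sum>a\<in>UNIV. \<Sum>b\<in>UNIV. y a b *\<^sub>R Cm a b) ** (\<Sum>a\<in>UNIV. \<Sum>b\<in>UNIV. x a b *\<^sub>R Cm a b)
   = (\<Sum>a\<in>UNIV. \<Sum>d\<in>UNIV. (-8 * (\<Sum>b\<in>UNIV. x a b * y b d - y a b * x b d)) *\<^sub>R Cm a d)"
proof -
  have xs: "x 1 1 = 0" "x 2 2 = 0" "x 3 3 = 0" "x 2 1 = - x 1 2" "x 3 1 = - x 1 3" "x 3 2 = - x 2 3"
    using xa[of 1 1] xa[of 2 2] xa[of 3 3] xa[of 2 1] xa[of 3 1] xa[of 3 2] by simp_all
  have ys: "y 1 1 = 0" "y 2 2 = 0" "y 3 3 = 0" "y 2 1 = - y 1 2" "y 3 1 = - y 1 3" "y 3 2 = - y 2 3"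
    using ya[of 1 1] ya[of 2 2] ya[of 3 3] ya[of 2 1] ya[of 3 1] ya[of 3 2] by simp_all
  show ?thesis
    unfolding mat_eq4 forall_4
    by (simp add: matrix_matrix_mult_def sum_3 sum_4 Clits xs ys sR_cx algebra_simps)
qed

lemma quad:
  assumes aab: "\<And>a b c d. W c d a b = - W c d b a" and acd: "\<And>a b c d. W c d a b = - W d c a b"
    and bia: "\<And>a b c d. W c d a b + W d b a c + W b c a d = 0"
  shows "(\<Sum>a\<in>UNIV. \<Sum>b\<in>UNIV. \<Sum>c\<in>UNIV. \<Sum>d\<in>UNIV. W c d a b *\<^sub>R (gamma_up c ** gamma_up d ** Cm a b))
     = (-4 * (\<Sum>a\<in>UNIV. \<Sum>c\<in>UNIV. W a c a c)) *\<^sub>R mat 1"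
proof -
  have w0: "W 1 1 1 1 = 0" using aab[of 1 1 1 1] acd[of 1 1 1 1] by simp
  have w1: "W 1 1 1 2 = 0" using aab[of 1 1 1 2] acd[of 1 1 1 2] by simp
  have w2: "W 1 1 1 3 = 0" using aab[of 1 1 1 3] acd[of 1 1 1 3] by simp
  have w3: "W 1 1 2 1 = 0" using aab[of 1 1 2 1] acd[of 1 1 2 1] by simp
  have w4: "W 1 1 2 2 = 0" using aab[of 1 1 2 2] acd[of 1 1 2 2] by simp
  have w5: "W 1 1 2 3 = 0" using aab[of 1 1 2 3] acd[of 1 1 2 3] by simp
  have w6: "W 1 1 3 1 = 0" using aab[of 1 1 3 1] acd[of 1 1 3 1] by simp
  have w7: "W 1 1 3 2 = 0" using aab[of 1 1 3 2] acd[of 1 1 3 2] by simp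
  have w8: "W 1 1 3 3 = 0" using aab[of 1 1 3 3] acd[of 1 1 3 3] by simp
  have w9: "W 1 2 1 1 = 0" using aab[of 1 2 1 1] acd[of 1 2 1 1] by simp
  have w10: "W 1 2 2 1 = - W 1 2 1 2" using aab[of 1 2 2 1] by simp
  have w11: "W 1 2 2 2 = 0" using aab[of 1 2 2 2] acd[of 1 2 2 2] by simp
  have w12: "W 1 2 3 1 = - W 1 2 1 3" using aab[of 1 2 3 1] by simp
  have w13: "W 1 2 3 2 = - W 1 2 2 3" using aab[of 1 2 3 2] by simp
  have w14: "W 1 2 3 3 = 0" using aab[of 1 2 3 3] acd[of 1 2 3 3] by simp
  have w15: "W 1 3 1 1 = 0" using aab[of 1 3 1 1] acd[of 1 3 1 1] by simp
  have w16: "W 1 3 2 1 = - W 1 3 1 2" using aab[of 1 3 2 1] by simp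
  have w17: "W 1 3 2 2 = 0" using aab[of 1 3 2 2] acd[of 1 3 2 2] by simp
  have w18: "W 1 3 3 1 = - W 1 3 1 3" using aab[of 1 3 3 1] by simp
  have w19: "W 1 3 3 2 = - W 1 3 2 3" using aab[of 1 3 3 2] by simp
  have w20: "W 1 3 3 3 = 0" using aab[of 1 3 3 3] acd[of 1 3 3 3] by simp
  have w21: "W 2 1 1 1 = 0" using aab[of 2 1 1 1] acd[of 2 1 1 1] by simp
  have w22: "W 2 1 1 2 = - W 1 2 1 2" using acd[of 2 1 1 2] by simp
  have w23: "W 2 1 1 3 = - W 1 2 1 3" using acd[of 2 1 1 3] by simp
  have w24: "W 2 1 2 1 = W 1 2 1 2" using aab[of 2 1 2 1] acd[of 2 1 1 2] by simp
  have w25: "W 2 1 2 2 = 0" using aab[of 2 1 2 2] acd[of 2 1 2 2] by simp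
  have w26: "W 2 1 2 3 = - W 1 2 2 3" using acd[of 2 1 2 3] by simp
  have w27: "W 2 1 3 1 = W 1 2 1 3" using aab[of 2 1 3 1] acd[of 2 1 1 3] by simp
  have w28: "W 2 1 3 2 = W 1 2 2 3" using aab[of 2 1 3 2] acd[of 2 1 2 3] by simp
  have w29: "W 2 1 3 3 = 0" using aab[of 2 1 3 3] acd[of 2 1 3 3] by simp
  have w30: "W 2 2 1 1 = 0" using aab[of 2 2 1 1] acd[of 2 2 1 1] by simp
  have w31: "W 2 2 1 2 = 0" using aab[of 2 2 1 2] acd[of 2 2 1 2] by simp
  have w32: "W 2 2 1 3 = 0" using aab[of 2 2 1 3] acd[of 2 2 1 3] by simp
  have w33: "W 2 2 2 1 = 0" using aab[of 2 2 2 1] acd[of 2 2 2 1] by simp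
  have w34: "W 2 2 2 2 = 0" using aab[of 2 2 2 2] acd[of 2 2 2 2] by simp
  have w35: "W 2 2 2 3 = 0" using aab[of 2 2 2 3] acd[of 2 2 2 3] by simp
  have w36: "W 2 2 3 1 = 0" using aab[of 2 2 3 1] acd[of 2 2 3 1] by simp
  have w37: "W 2 2 3 2 = 0" using aab[of 2 2 3 2] acd[of 2 2 3 2] by simp
  have w38: "W 2 2 3 3 = 0" using aab[of 2 2 3 3] acd[of 2 2 3 3] by simp
  have w39: "W 2 3 1 1 = 0" using aab[of 2 3 1 1] acd[of 2 3 1 1] by simp
  have w40: "W 2 3 2 1 = - W 2 3 1 2" using aab[of 2 3 2 1] by simp
  have w41: "W 2 3 2 2 = 0" using aab[of 2 3 2 2] acd[of 2 3 2 2] by simp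
  have w42: "W 2 3 3 1 = - W 2 3 1 3" using aab[of 2 3 3 1] by simp
  have w43: "W 2 3 3 2 = - W 2 3 2 3" using aab[of 2 3 3 2] by simp
  have w44: "W 2 3 3 3 = 0" using aab[of 2 3 3 3] acd[of 2 3 3 3] by simp
  have w45: "W 3 1 1 1 = 0" using aab[of 3 1 1 1] acd[of 3 1 1 1] by simp
  have w46: "W 3 1 1 2 = - W 1 3 1 2" using acd[of 3 1 1 2] by simp
  have w47: "W 3 1 1 3 = - W 1 3 1 3" using acd[of 3 1 1 3] by simp
  have w48: "W 3 1 2 1 = W 1 3 1 2" using aab[of 3 1 2 1] acd[of 3 1 1 2] by simp
  have w49: "W 3 1 2 2 = 0" using aab[of 3 1 2 2] acd[of 3 1 2 2] by simp
  have w50: "W 3 1 2 3 = - W 1 3 2 3" using acd[of 3 1 2 3] by simp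
  have w51: "W 3 1 3 1 = W 1 3 1 3" using aab[of 3 1 3 1] acd[of 3 1 1 3] by simp
  have w52: "W 3 1 3 2 = W 1 3 2 3" using aab[of 3 1 3 2] acd[of 3 1 2 3] by simp
  have w53: "W 3 1 3 3 = 0" using aab[of 3 1 3 3] acd[of 3 1 3 3] by simp
  have w54: "W 3 2 1 1 = 0" using aab[of 3 2 1 1] acd[of 3 2 1 1] by simp
  have w55: "W 3 2 1 2 = - W 2 3 1 2" using acd[of 3 2 1 2] by simp
  have w56: "W 3 2 1 3 = - W 2 3 1 3" using acd[of 3 2 1 3] by simp
  have w57: "W 3 2 2 1 = W 2 3 1 2" using aab[of 3 2 2 1] acd[of 3 2 1 2] by simp
  have w58: "W 3 2 2 2 = 0" using aab[of 3 2 2 2] acd[of 3 2 2 2] by simp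
  have w59: "W 3 2 2 3 = - W 2 3 2 3" using acd[of 3 2 2 3] by simp
  have w60: "W 3 2 3 1 = W 2 3 1 3" using aab[of 3 2 3 1] acd[of 3 2 1 3] by simp
  have w61: "W 3 2 3 2 = W 2 3 2 3" using aab[of 3 2 3 2] acd[of 3 2 2 3] by simp
  have w62: "W 3 2 3 3 = 0" using aab[of 3 2 3 3] acd[of 3 2 3 3] by simp
  have w63: "W 3 3 1 1 = 0" using aab[of 3 3 1 1] acd[of 3 3 1 1] by simp
  have w64: "W 3 3 1 2 = 0" using aab[of 3 3 1 2] acd[of 3 3 1 2] by simp
  have w65: "W 3 3 1 3 = 0" using aab[of 3 3 1 3] acd[of 3 3 1 3] by simp
  have w66: "W 3 3 2 1 = 0" using aab[of 3 3 2 1] acd[of 3 3 2 1] by simp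
  have w67: "W 3 3 2 2 = 0" using aab[of 3 3 2 2] acd[of 3 3 2 2] by simp
  have w68: "W 3 3 2 3 = 0" using aab[of 3 3 2 3] acd[of 3 3 2 3] by simp
  have w69: "W 3 3 3 1 = 0" using aab[of 3 3 3 1] acd[of 3 3 3 1] by simp
  have w70: "W 3 3 3 2 = 0" using aab[of 3 3 3 2] acd[of 3 3 3 2] by simp
  have w71: "W 3 3 3 3 = 0" using aab[of 3 3 3 3] acd[of 3 3 3 3] by simp
  note ws = w0 w1 w2 w3 w4 w5 w6 w7 w8 w9 w10 w11 w12 w13 w14 w15 w16 w17 w18 w19 w20 w21 w22 w23 w24 w25 w26 w27 w28 w29 w30 w31 w32 w33 w34 w35 w36 w37 w38 w39 w40 w41 w42 w43 w44 w45 w46 w47 w48 w49 w50 w51 w52 w53 w54 w55 w56 w57 w58 w59 w60 w61 w62 w63 w64 w65 w66 w67 w68 w69 w70 w71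
  note bis = bia[of 1 1 1 1] bia[of 1 1 1 2] bia[of 1 1 1 3] bia[of 1 1 2 1] bia[of 1 1 2 2] bia[of 1 1 2 3] bia[of 1 1 3 1] bia[of 1 1 3 2] bia[of 1 1 3 3] bia[of 1 2 1 1] bia[of 1 2 1 2] bia[of 1 2 1 3] bia[of 1 2 2 1] bia[of 1 2 2 2] bia[of 1 2 2 3] bia[of 1 2 3 1] bia[of 1 2 3 2] bia[of 1 2 3 3] bia[of 1 3 1 1] bia[of 1 3 1 2] bia[of 1 3 1 3] bia[of 1 3 2 1] bia[of 1 3 2 2] bia[of 1 3 2 3] bia[of 1 3 3 1] bia[of 1 3 3 2] bia[of 1 3 3 3] bia[of 2 1 1 1] bia[of 2 1 1 2] bia[of 2 1 1 3] bia[of 2 1 2 1] bia[of 2 1 2 2] bia[of 2 1 2 3] bia[of 2 1 3 1] bia[of 2 1 3 2] bia[of 2 1 3 3] bia[of 2 2 1 1] bia[of 2 2 1 2] bia[of 2 2 1 3] bia[of 2 2 2 1] bia[of 2 2 2 2] bia[of 2 2 2 3] bia[of 2 2 3 1] bia[of 2 2 3 2] bia[of 2 2 3 3] bia[of 2 3 1 1] bia[of 2 3 1 2] bia[of 2 3 1 3] bia[of 2 3 2 1] bia[of 2 3 2 2] bia[of 2 3 2 3] bia[of 2 3 3 1] bia[of 2 3 3 2] bia[of 2 3 3 3] bia[of 3 1 1 1] bia[of 3 1 1 2] bia[of 3 1 1 3] bia[of 3 1 2 1] bia[of 3 1 2 2] bia[of 3 1 2 3] bia[of 3 1 3 1] bia[of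 3 1 3 2] bia[of 3 1 3 3] bia[of 3 2 1 1] bia[of 3 2 1 2] bia[of 3 2 1 3] bia[of 3 2 2 1] bia[of 3 2 2 2] bia[of 3 2 2 3] bia[of 3 2 3 1] bia[of 3 2 3 2] bia[of 3 2 3 3] bia[of 3 3 1 1] bia[of 3 3 1 2] bia[of 3 3 1 3] bia[of 3 3 2 1] bia[of 3 3 2 2] bia[of 3 3 2 3] bia[of 3 3 3 1] bia[of 3 3 3 2] bia[of 3 3 3 3]
  note bis' = bis[simplified ws]
  show ?thesis
    apply (simp only: sum_3 Plits Clits)
    unfolding mat_eq4 forall_4
    apply (simp add: matrix_matrix_mult_def sum_4 mat_def ws sR_cx complex_eq_iff)
    apply (intro conjI)
    apply (insert bis', linarith)+
    done
qed

definition C2 :: "(real^3) set \<Rightarrow> (real^3 \<Rightarrow> 'b::real_normed_vector) \<Rightarrow> bool" where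
  "C2 S F \<longleftrightarrow> D1 S F \<and> (\<forall>i. D1 S (pd i F))"

lemma C2_D1: "C2 S F \<Longrightarrow> D1 S F" and C2_D1pd: "C2 S F \<Longrightarrow> D1 S (pd i F)"
  unfolding C2_def by blast+

lemma C2_bil:
  assumes P: "bounded_bilinear P" and S: "open S" and F: "C2 S F" and G: "C2 S G"
  shows "C2 S (\<lambda>x. P (F x) (G x))"
  unfolding C2_def
proof (intro conjI allI)
  show "D1 S (\<lambda>x. P (F x) (G x))" by (rule D1_bil(1)[OF P C2_D1[OF F] C2_D1[OF G]])
  fix i
  have "D1 S (\<lambda>x. P (F x) (pd i G x) + P (pd i F x) (G x))"
    by (intro D1_add(1) D1_bil(1)[OF P] C2_D1[OF F] C2_D1[OF G] C2_D1pd[OF F] C2_D1pd[OF G])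
  then show "D1 S (pd i (\<lambda>x. P (F x) (G x)))"
    by (rule D1_local[OF S]) (simp add: D1_bil(2)[OF P C2_D1[OF F] C2_D1[OF G]])
qed

lemma C2_lin:
  assumes L: "bounded_linear L" and S: "open S" and F: "C2 S F"
  shows "C2 S (\<lambda>x. L (F x))"
  unfolding C2_def
proof (intro conjI allI)
  show "D1 S (\<lambda>x. L (F x))" by (rule D1_lin(1)[OF L C2_D1[OF F]])
  fix i
  have "D1 S (\<lambda>x. L (pd i F x))" by (rule D1_lin(1)[OF L C2_D1pd[OF F]])
  then show "D1 S (pd i (\<lambda>x. L (F x)))"
    by (rule D1_local[OF S]) (simp add: D1_lin(2)[OF L C2_D1[OF F]])
qed

lemma C2_mult: "open S \<Longrightarrow> C2 S F \<Longrightarrow> C2 S G \<Longrightarrow> C2 S (\<lambda>x. F x * G x :: real)"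
  by (rule C2_bil[OF bounded_bilinear_mult])

lemma C2_scaleR: "open S \<Longrightarrow> C2 S F \<Longrightarrow> C2 S G \<Longrightarrow> C2 S (\<lambda>x. F x *\<^sub>R G x)"
  by (rule C2_bil[OF bounded_bilinear_scaleR])

lemma C2_const: "C2 S (\<lambda>x. c)"
  unfolding C2_def pd_const by (simp add: D1_const)

lemma C2_add:
  assumes S: "open S" and F: "C2 S F" and G: "C2 S G"
  shows "C2 S (\<lambda>x. F x + G x)"
  unfolding C2_def
proof (intro conjI allI)
  show "D1 S (\<lambda>x. F x + G x)" by (rule D1_add(1)[OF C2_D1[OF F] C2_D1[OF G]])
  fix i
  have "D1 S (\<lambda>x. pd i F x + pd i G x)" by (rule D1_add(1)[OF C2_D1pd[OF F] C2_D1pd[OF G]])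
  then show "D1 S (pd i (\<lambda>x. F x + G x))"
    by (rule D1_local[OF S]) (simp add: D1_add(2)[OF C2_D1[OF F] C2_D1[OF G]])
qed

lemma C2_minus:
  assumes S: "open S" and F: "C2 S F"
  shows "C2 S (\<lambda>x. - F x)"
  using C2_lin[OF bounded_linear_minus[OF bounded_linear_ident] S F] by simp

lemma C2_diff:
  assumes S: "open S" and F: "C2 S F" and G: "C2 S G"
  shows "C2 S (\<lambda>x. F x - G x)"
  using C2_add[OF S F C2_minus[OF S G]] by simp

lemma C2_sum:
  assumes S: "open S" and A: "finite A" and F: "\<And>a. a \<in> A \<Longrightarrow> C2 S (F a)"
  shows "C2 S (\<lambda>x. \<Sum>a\<in>A. F a x)"
  using A F
proof (induction A rule: finite_induct)
  case empty then show ?case by (simp add: C2_const)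
next
  case (insert a A)
  then show ?case by (simp add: C2_add[OF S])
qed

lemma D1_inv:
  assumes F: "D1 S F" and nz: "\<And>x. x \<in> S \<Longrightarrow> F x \<noteq> (0::real)"
  shows "D1 S (\<lambda>x. inverse (F x))"
    and "x \<in> S \<Longrightarrow> pd i (\<lambda>x. inverse (F x)) x = - (inverse (F x) * pd i F x * inverse (F x))"
proof -
  have *: "((\<lambda>s. inverse (F (x + s *\<^sub>R axis i 1))) has_vector_derivative
      - (inverse (F x) * pd i F x * inverse (F x))) (at 0)" if "x \<in> S" for x i
  proof -
    have "((\<lambda>s. F (x + s *\<^sub>R axis i 1)) has_real_derivative pd i F x) (at 0)"
      using D1D[OF F that] by (simp add: has_real_derivative_iff_has_vector_derivative)
    from DERIV_inverse'[OF this] nz[OF that]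
    show ?thesis by (simp add: has_real_derivative_iff_has_vector_derivative)
  qed
  show "D1 S (\<lambda>x. inverse (F x))" using * by (intro D1I) blast
  show "x \<in> S \<Longrightarrow> pd i (\<lambda>x. inverse (F x)) x = - (inverse (F x) * pd i F x * inverse (F x))"
    using * by (intro pd_eq)
qed

lemma C2_inv:
  assumes S: "open S" and F: "C2 S F" and nz: "\<And>x. x \<in> S \<Longrightarrow> F x \<noteq> (0::real)"
  shows "C2 S (\<lambda>x. inverse (F x))"
  unfolding C2_def
proof (intro conjI allI)
  show "D1 S (\<lambda>x. inverse (F x))" by (rule D1_inv(1)[OF C2_D1[OF F] nz])
  fix i
  have "D1 S (\<lambda>x. - (inverse (F x) * pd i F x * inverse (F x)))"
    by (intro D1_minus(1) D1_bil(1)[OF bounded_bilinear_mult] D1_inv(1)[OF C2_D1[OF F] nz] C2_D1pd[OF F]) auto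
  then show "D1 S (pd i (\<lambda>x. inverse (F x)))"
    by (rule D1_local[OF S]) (simp add: D1_inv(2)[OF C2_D1[OF F] nz])
qed

definition adj3 :: "real^3^3 \<Rightarrow> real^3^3" where
  "adj3 A = vector [vector [A$2$2 * A$3$3 - A$2$3 * A$3$2, A$3$2 * A$1$3 - A$3$3 * A$1$2, A$1$2 * A$2$3 - A$1$3 * A$2$2], vector [A$2$3 * A$3$1 - A$2$1 * A$3$3, A$3$3 * A$1$1 - A$3$1 * A$1$3, A$1$3 * A$2$1 - A$1$1 * A$2$3], vector [A$2$1 * A$3$2 - A$2$2 * A$3$1, A$3$1 * A$1$2 - A$3$2 * A$1$1, A$1$1 * A$2$2 - A$1$2 * A$2$1]]"

lemma mat_eq3: "(A::real^3^3) = B \<longleftrightarrow> (\<forall>i j. A$i$j = B$i$j)"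
  by (simp add: vec_eq_iff)

lemma adj3: "A ** adj3 A = det A *\<^sub>R mat 1"
  unfolding mat_eq3 forall_3
  by (simp add: adj3_def matrix_matrix_mult_def sum_3 det_3 mat_def algebra_simps)

lemma inv_unique:
  fixes A B :: "real^3^3"
  assumes AB: "A ** B = mat 1"
  shows "matrix_inv A = B"
proof -
  have BA: "B ** A = mat 1" using AB matrix_left_right_inverse by blast
  have "A ** matrix_inv A = mat 1 \<and> matrix_inv A ** A = mat 1"
    unfolding matrix_inv_def by (rule someI[of _ B]) (use AB BA in blast)
  then have "matrix_inv A = matrix_inv A ** (A ** B)" using AB by simp
  also have "\<dots> = B" by (simp add: matrix_mul_assoc \<open>A ** matrix_inv A = mat 1 \<and> matrix_inv A ** A = mat 1\<close>)
  finally show ?thesis .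
qed

lemma inv3: "det A \<noteq> 0 \<Longrightarrow> matrix_inv A = inverse (det A) *\<^sub>R adj3 A"
proof (rule inv_unique)
  assume d: "det A \<noteq> 0"
  have "A ** (inverse (det A) *\<^sub>R adj3 A) = inverse (det A) *\<^sub>R (A ** adj3 A)"
    by (simp add: mat_eq3 matrix_matrix_mult_def sum_distrib_left algebra_simps)
  then show "A ** (inverse (det A) *\<^sub>R adj3 A) = mat 1" using d by (simp add: adj3)
qed

lemma D1_mult: "D1 S F \<Longrightarrow> D1 S G \<Longrightarrow> D1 S (\<lambda>x. F x * G x :: real)"
  by (rule D1_bil(1)[OF bounded_bilinear_mult])
lemma pd_mult: "D1 S F \<Longrightarrow> D1 S G \<Longrightarrow> x \<in> S \<Longrightarrow> pd i (\<lambda>x. F x * G x :: real) x = F x * pd i G x + pd i F x * G x"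
  by (rule D1_bil(2)[OF bounded_bilinear_mult])

lemma C2_local:
  assumes S: "open S" and F: "C2 S F" and eq: "\<And>y. y \<in> S \<Longrightarrow> F y = G y"
  shows "C2 S G"
  unfolding C2_def
proof (intro conjI allI)
  show "D1 S G" by (rule D1_local[OF S C2_D1[OF F] eq])
  fix i show "D1 S (pd i G)"
    by (rule D1_local[OF S C2_D1pd[OF F]]) (rule pd_local[OF S _ eq])
qed

locale frame =
  fixes f :: "3 \<Rightarrow> 3 \<Rightarrow> real^3 \<Rightarrow> real" and \<Omega> :: "(real^3) set"
  assumes opn: "open \<Omega>" and sm: "\<And>a i. smooth_on \<Omega> (f a i)"
    and det0: "\<And>x. x \<in> \<Omega> \<Longrightarrow> det (\<chi> a i. f a i x) \<noteq> 0"
begin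

definition "Hm x = (\<chi> k l. hinv f k l x)"

lemma Hm_eq: "Hm x = transpose (\<chi> a i. f a i x) ** (\<chi> a i. f a i x)"
  by (simp add: Hm_def mat_eq3 matrix_matrix_mult_def transpose_def hinv_def)

lemma det_Hm: "x \<in> \<Omega> \<Longrightarrow> det (Hm x) \<noteq> 0"
  unfolding Hm_eq by (simp add: det_mul det_transpose det0)

lemma hinv_sym: "hinv f i j x = hinv f j i x"
  by (simp add: hinv_def mult.commute)

lemma hlow_Hm: "hlow f i j x = matrix_inv (Hm x) $ i $ j"
  by (simp add: hlow_def Hm_def)

lemma inv_props:
  assumes "det (A::real^3^3) \<noteq> 0" shows "A ** matrix_inv A = mat 1" "matrix_inv A ** A = mat 1"
proof -
  have "A ** (inverse (det A) *\<^sub>R adj3 A) = inverse (det A) *\<^sub>R (A ** adj3 A)"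
    by (simp add: mat_eq3 matrix_matrix_mult_def sum_distrib_left algebra_simps)
  then have "A ** matrix_inv A = mat 1" using assms by (simp add: adj3 inv3)
  then show "A ** matrix_inv A = mat 1" "matrix_inv A ** A = mat 1" using matrix_left_right_inverse by blast+
qed

lemma hlow_hinv: "x \<in> \<Omega> \<Longrightarrow> (\<Sum>k\<in>UNIV. hlow f i k x * hinv f k j x) = (if i = j then 1 else 0)"
  using inv_props(2)[OF det_Hm, of x] unfolding mat_eq3
  by (auto simp: matrix_matrix_mult_def hlow_Hm mat_def Hm_def)

lemma hinv_hlow: "x \<in> \<Omega> \<Longrightarrow> (\<Sum>k\<in>UNIV. hinv f i k x * hlow f k j x) = (if i = j then 1 else 0)"
  using inv_props(1)[OF det_Hm, of x] unfolding mat_eq3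
  by (auto simp: matrix_matrix_mult_def hlow_Hm mat_def Hm_def)

lemma hlow_sym: "x \<in> \<Omega> \<Longrightarrow> hlow f i j x = hlow f j i x"
proof -
  assume x: "x \<in> \<Omega>"
  have tH: "transpose (Hm x) = Hm x" by (simp add: Hm_def transpose_def mat_eq3 hinv_sym)
  have "Hm x ** transpose (matrix_inv (Hm x)) = mat 1"
    using inv_props(2)[OF det_Hm[OF x]] matrix_transpose_mul[of "matrix_inv (Hm x)" "Hm x"] tH
    by (metis transpose_mat)
  then have "matrix_inv (Hm x) = transpose (matrix_inv (Hm x))" by (rule inv_unique)
  then have "matrix_inv (Hm x) $ i $ j = transpose (matrix_inv (Hm x)) $ i $ j" by simp
  then show ?thesis by (simp add: hlow_Hm transpose_def)
qed

lemma C2_f: "C2 \<Omega> (f a i)"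
  unfolding C2_def using smooth_D1[OF sm] by blast

lemma C2_hinv: "C2 \<Omega> (hinv f i j)"
proof -
  have "C2 \<Omega> (\<lambda>x. \<Sum>a\<in>UNIV. f a i x * f a j x)"
    by (intro C2_sum C2_mult opn C2_f) auto
  then show ?thesis by (simp add: hinv_def[abs_def])
qed

lemma C2_Hm: "C2 \<Omega> (\<lambda>x. Hm x $ k $ l)"
  using C2_hinv by (simp add: Hm_def)

lemma C2_detHm: "C2 \<Omega> (\<lambda>x. det (Hm x))"
  unfolding det_3 by (intro C2_add C2_diff C2_mult C2_Hm opn)

lemma C2_adj: "C2 \<Omega> (\<lambda>x. adj3 (Hm x) $ i $ j)"
  using exhaust_3[of i] exhaust_3[of j]
  by (elim disjE; simp add: adj3_def; intro C2_diff C2_mult C2_Hm opn)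

lemma C2_hlow: "C2 \<Omega> (hlow f i j)"
proof (rule C2_local[OF opn])
  show "C2 \<Omega> (\<lambda>x. inverse (det (Hm x)) * adj3 (Hm x) $ i $ j)"
    by (intro C2_mult C2_inv C2_detHm C2_adj opn det_Hm)
  show "inverse (det (Hm y)) * adj3 (Hm y) $ i $ j = hlow f i j y" if "y \<in> \<Omega>" for y
    using det_Hm[OF that] by (simp add: hlow_Hm inv3)
qed

end

lemma sdelta: "(\<Sum>l\<in>(UNIV::3 set). (if m = l then 1 else 0) * (B l::real)) = B m"
  by (simp add: if_distrib[of "\<lambda>z. z * _"] sum.delta cong: if_cong)

lemma sum_swap_mult: "(\<Sum>k\<in>(UNIV::3 set). a k * (c * (\<Sum>l\<in>(UNIV::3 set). b k l * d l))) = c * (\<Sum>l\<in>UNIV. (\<Sum>k\<in>UNIV. a k * b k l) * (d l::real))"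
proof -
  have "(\<Sum>k\<in>(UNIV::3 set). a k * (c * (\<Sum>l\<in>(UNIV::3 set). b k l * d l))) = c * (\<Sum>k\<in>UNIV. \<Sum>l\<in>UNIV. a k * b k l * d l)"
    by (simp add: sum_distrib_left mult_ac)
  also have "\<dots> = c * (\<Sum>l\<in>UNIV. \<Sum>k\<in>UNIV. a k * b k l * d l)" by (subst sum.swap) simp
  also have "\<dots> = c * (\<Sum>l\<in>UNIV. (\<Sum>k\<in>UNIV. a k * b k l) * (d l::real))" by (simp add: sum_distrib_right)
  finally show ?thesis .
qed

context frame begin

lemma fco_eq: "f_co f a j x = (\<Sum>k\<in>UNIV. hlow f j k x * f a k x)"
  by (simp add: f_co_def gsp_def eta_sp_def sum_negf)

lemma Fr2: "x \<in> \<Omega> \<Longrightarrow> (\<Sum>a\<in>UNIV. f a i x * f_co f a j x) = (if i = j then 1 else 0)"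
proof -
  assume x: "x \<in> \<Omega>"
  have "(\<Sum>a\<in>UNIV. f a i x * f_co f a j x) = (\<Sum>k\<in>UNIV. hlow f j k x * hinv f k i x)"
    by (simp add: fco_eq hinv_def sum_3 algebra_simps)
  also have "\<dots> = (if i = j then 1 else 0)" using hlow_hinv[OF x, of j i] by auto
  finally show ?thesis .
qed

lemma Fr1: "x \<in> \<Omega> \<Longrightarrow> (\<Sum>j\<in>UNIV. f_co f a j x * f b j x) = (if a = b then 1 else 0)"
proof -
  assume x: "x \<in> \<Omega>"
  define T where "T = (\<chi> a j. f_co f a j x)"
  define Fm where "Fm = (\<chi> a i. f a i x)"
  have "transpose Fm ** T = mat 1"
    unfolding mat_eq3 using Fr2[OF x] by (simp add: T_def Fm_def matrix_matrix_mult_def transpose_def mat_def)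
  then have "T ** transpose Fm = mat 1" using matrix_left_right_inverse by blast
  then show ?thesis unfolding mat_eq3
    by (simp add: T_def Fm_def matrix_matrix_mult_def transpose_def mat_def)
qed

lemma C2_fco: "C2 \<Omega> (f_co f a j)"
proof (rule C2_local[OF opn])
  show "C2 \<Omega> (\<lambda>x. \<Sum>k\<in>UNIV. hlow f j k x * f a k x)"
    by (intro C2_sum C2_mult C2_hlow C2_f opn) auto
qed (simp add: fco_eq)

lemma hlow_pd_sym: "x \<in> \<Omega> \<Longrightarrow> pd i (hlow f m k) x = pd i (hlow f k m) x"
  by (rule pd_local[OF opn]) (auto intro: hlow_sym)

lemma chr_sym: "x \<in> \<Omega> \<Longrightarrow> chr f k i j x = chr f k j i x"
  by (simp add: chr_def hlow_pd_sym[of x] algebra_simps)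

lemma chr_low: "x \<in> \<Omega> \<Longrightarrow> (\<Sum>k\<in>UNIV. hlow f m k x * chr f k i j x)
    = (1/2) * (pd i (hlow f m j) x + pd j (hlow f m i) x - pd m (hlow f i j) x)"
proof -
  assume x: "x \<in> \<Omega>"
  have "(\<Sum>k\<in>UNIV. hlow f m k x * chr f k i j x) = (1/2) * (\<Sum>l\<in>UNIV. (\<Sum>k\<in>UNIV. hlow f m k x * hinv f k l x) *
     (pd i (hlow f l j) x + pd j (hlow f l i) x - pd l (hlow f i j) x))"
    unfolding chr_def by (rule sum_swap_mult)
  also have "\<dots> = (1/2) * (pd i (hlow f m j) x + pd j (hlow f m i) x - pd m (hlow f i j) x)"
    by (simp add: hlow_hinv[OF x] sdelta)
  finally show ?thesis .
qed

lemma D1_chr: "D1 \<Omega> (chr f k i j)"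
proof -
  have "D1 \<Omega> (\<lambda>x. 1 / 2 * (\<Sum>l\<in>UNIV. hinv f k l x * (pd i (hlow f l j) x + pd j (hlow f l i) x - pd l (hlow f i j) x)))"
    by (intro D1_mult D1_const D1_sum(1) D1_add(1) D1_diff(1) C2_D1pd[OF C2_hlow] C2_D1[OF C2_hinv]) auto
  then show ?thesis by (simp add: chr_def[abs_def])
qed

lemma chr_pd_sym: "x \<in> \<Omega> \<Longrightarrow> pd l (chr f k i j) x = pd l (chr f k j i) x"
  by (rule pd_local[OF opn]) (auto intro: chr_sym)

definition "Pc i b j x = pd i (f b j) x + (\<Sum>k\<in>UNIV. chr f j i k x * f b k x)"
definition "w i a b x = (\<Sum>j\<in>UNIV. f_co f a j x * Pc i b j x)"

lemma pd_fup: "x \<in> \<Omega> \<Longrightarrow> pd i (f_up f j b) x = - pd i (f b j) x"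
proof -
  assume x: "x \<in> \<Omega>"
  have "f_up f j b = (\<lambda>x. - f b j x)" by (simp add: f_up_def[abs_def] eta_sp_def)
  then show ?thesis using D1_minus(2)[OF C2_D1[OF C2_f] x] by simp
qed

lemma alpha_w: "x \<in> \<Omega> \<Longrightarrow> alpha_conn f i a b x = - w i a b x"
  by (simp add: alpha_conn_def w_def Pc_def pd_fup f_up_def eta_sp_def sum_distrib_left
      sum.distrib sum_negf algebra_simps)

lemma D1_w: "D1 \<Omega> (w i a b)"
proof -
  have "D1 \<Omega> (\<lambda>x. \<Sum>j\<in>UNIV. f_co f a j x * (pd i (f b j) x + (\<Sum>k\<in>UNIV. chr f j i k x * f b k x)))"
    by (intro D1_sum(1) D1_mult D1_add(1) C2_D1[OF C2_fco] C2_D1pd[OF C2_f] C2_D1[OF C2_f] D1_chr) auto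
  then show ?thesis by (simp add: w_def[abs_def] Pc_def)
qed

end

context frame begin

lemma A1: "x \<in> \<Omega> \<Longrightarrow> (\<Sum>j\<in>UNIV. f_co f a j x * (\<Sum>k\<in>UNIV. chr f j i k x * f b k x))
   = (\<Sum>m\<in>UNIV. \<Sum>k\<in>UNIV. f a m x * f b k x * ((1/2) * (pd i (hlow f m k) x + pd k (hlow f m i) x - pd m (hlow f i k) x)))"
proof -
  assume x: "x \<in> \<Omega>"
  have "(\<Sum>j\<in>UNIV. f_co f a j x * (\<Sum>k\<in>UNIV. chr f j i k x * f b k x))
     = (\<Sum>m\<in>UNIV. \<Sum>k\<in>UNIV. f a m x * f b k x * (\<Sum>j\<in>UNIV. hlow f m j x * chr f j i k x))"
    by (simp add: fco_eq sum_3 hlow_sym[OF x] algebra_simps)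
  then show ?thesis by (simp add: chr_low[OF x])
qed

lemma pd_fco: "x \<in> \<Omega> \<Longrightarrow> pd i (f_co f a j) x = (\<Sum>m\<in>UNIV. hlow f j m x * pd i (f a m) x + pd i (hlow f j m) x * f a m x)"
proof -
  assume x: "x \<in> \<Omega>"
  have "pd i (f_co f a j) x = pd i (\<lambda>y. \<Sum>m\<in>UNIV. hlow f j m y * f a m y) x"
    by (rule pd_local[OF opn x]) (simp add: fco_eq)
  also have "\<dots> = (\<Sum>m\<in>UNIV. pd i (\<lambda>y. hlow f j m y * f a m y) x)"
    by (rule D1_sum(2)) (auto intro: D1_mult C2_D1[OF C2_hlow] C2_D1[OF C2_f] x)
  also have "\<dots> = (\<Sum>m\<in>UNIV. hlow f j m x * pd i (f a m) x + pd i (hlow f j m) x * f a m x)"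
    by (rule sum.cong[OF refl]) (rule pd_mult[OF C2_D1[OF C2_hlow] C2_D1[OF C2_f] x])
  finally show ?thesis .
qed

lemma w_anti: "x \<in> \<Omega> \<Longrightarrow> w i a b x = - w i b a x"
proof -
  assume x: "x \<in> \<Omega>"
  have "pd i (\<lambda>y. \<Sum>j\<in>UNIV. f_co f a j y * f b j y) x = pd i (\<lambda>y. if a = b then 1 else (0::real)) x"
    by (rule pd_local[OF opn x]) (simp add: Fr1)
  then have Q0: "pd i (\<lambda>y. \<Sum>j\<in>UNIV. f_co f a j y * f b j y) x = 0" by (simp add: pd_const)
  have "pd i (\<lambda>y. \<Sum>j\<in>UNIV. f_co f a j y * f b j y) x = (\<Sum>j\<in>UNIV. pd i (\<lambda>y. f_co f a j y * f b j y) x)"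
    by (rule D1_sum(2)) (auto intro: D1_mult C2_D1[OF C2_fco] C2_D1[OF C2_f] x)
  also have "\<dots> = (\<Sum>j\<in>UNIV. f_co f a j x * pd i (f b j) x + pd i (f_co f a j) x * f b j x)"
    by (rule sum.cong[OF refl]) (rule pd_mult[OF C2_D1[OF C2_fco] C2_D1[OF C2_f] x])
  finally have Qe: "(\<Sum>j\<in>UNIV. f_co f a j x * pd i (f b j) x + pd i (f_co f a j) x * f b j x) = 0"
    using Q0 by simp
  have "w i a b x + w i b a x = (\<Sum>j\<in>UNIV. f_co f a j x * pd i (f b j) x + pd i (f_co f a j) x * f b j x)"
    unfolding w_def Pc_def distrib_left sum.distrib A1[OF x] pd_fco[OF x]
    by (simp add: fco_eq sum_3 hlow_sym[OF x] hlow_pd_sym[OF x] algebra_simps)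
  then show ?thesis using Qe by simp
qed

end

context frame begin

lemma dFr1: "x \<in> \<Omega> \<Longrightarrow> (\<Sum>j\<in>UNIV. f_co f a j x * pd i (f b j) x + pd i (f_co f a j) x * f b j x) = 0"
proof -
  assume x: "x \<in> \<Omega>"
  have "pd i (\<lambda>y. \<Sum>j\<in>UNIV. f_co f a j y * f b j y) x = pd i (\<lambda>y. if a = b then 1 else (0::real)) x"
    by (rule pd_local[OF opn x]) (simp add: Fr1)
  then have Q0: "pd i (\<lambda>y. \<Sum>j\<in>UNIV. f_co f a j y * f b j y) x = 0" by (simp add: pd_const)
  have "pd i (\<lambda>y. \<Sum>j\<in>UNIV. f_co f a j y * f b j y) x = (\<Sum>j\<in>UNIV. pd i (\<lambda>y. f_co f a j y * f b j y) x)"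
    by (rule D1_sum(2)) (auto intro: D1_mult C2_D1[OF C2_fco] C2_D1[OF C2_f] x)
  also have "\<dots> = (\<Sum>j\<in>UNIV. f_co f a j x * pd i (f b j) x + pd i (f_co f a j) x * f b j x)"
    by (rule sum.cong[OF refl]) (rule pd_mult[OF C2_D1[OF C2_fco] C2_D1[OF C2_f] x])
  finally show ?thesis using Q0 by simp
qed

lemma pd_Th: "x \<in> \<Omega> \<Longrightarrow> pd i (f_co f a m) x
   = - (\<Sum>c\<in>UNIV. \<Sum>n\<in>UNIV. f_co f a n x * pd i (f c n) x * f_co f c m x)"
proof -
  assume x: "x \<in> \<Omega>"
  have "pd i (f_co f a m) x = (\<Sum>n\<in>UNIV. (if n = m then 1 else 0) * pd i (f_co f a n) x)"
    by (simp add: if_distrib[of "\<lambda>z. z * _"] sum.delta sum.delta' cong: if_cong)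
  also have "\<dots> = (\<Sum>n\<in>UNIV. (\<Sum>c\<in>UNIV. f c n x * f_co f c m x) * pd i (f_co f a n) x)"
    by (simp add: Fr2[OF x])
  also have "\<dots> = (\<Sum>c\<in>UNIV. (\<Sum>n\<in>UNIV. pd i (f_co f a n) x * f c n x) * f_co f c m x)"
    by (simp add: sum_3 algebra_simps)
  also have "\<dots> = (\<Sum>c\<in>UNIV. (- (\<Sum>n\<in>UNIV. f_co f a n x * pd i (f c n) x)) * f_co f c m x)"
  proof (rule sum.cong[OF refl])
    fix c
    have "(\<Sum>n\<in>UNIV. pd i (f_co f a n) x * f c n x) = - (\<Sum>n\<in>UNIV. f_co f a n x * pd i (f c n) x)"
      using dFr1[OF x, of a i c] by (simp add: sum.distrib eq_neg_iff_add_eq_0 add.commute)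
    then show "(\<Sum>n\<in>UNIV. pd i (f_co f a n) x * f c n x) * f_co f c m x = (- (\<Sum>n\<in>UNIV. f_co f a n x * pd i (f c n) x)) * f_co f c m x"
      by simp
  qed
  also have "\<dots> = - (\<Sum>c\<in>UNIV. \<Sum>n\<in>UNIV. f_co f a n x * pd i (f c n) x * f_co f c m x)"
    by (simp add: sum_3 algebra_simps)
  finally show ?thesis .
qed

lemma D1_Pc: "D1 \<Omega> (Pc j b m)"
proof -
  have "D1 \<Omega> (\<lambda>x. pd j (f b m) x + (\<Sum>k\<in>UNIV. chr f m j k x * f b k x))"
    by (intro D1_add(1) D1_sum(1) D1_mult C2_D1pd[OF C2_f] C2_D1[OF C2_f] D1_chr) auto
  then show ?thesis by (simp add: Pc_def[abs_def])
qed

lemma pd_Pc: "x \<in> \<Omega> \<Longrightarrow> pd i (Pc j b m) x = pd i (pd j (f b m)) x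
    + (\<Sum>l\<in>UNIV. chr f m j l x * pd i (f b l) x + pd i (chr f m j l) x * f b l x)"
proof -
  assume x: "x \<in> \<Omega>"
  have e: "Pc j b m = (\<lambda>x. pd j (f b m) x + (\<Sum>k\<in>UNIV. chr f m j k x * f b k x))"
    by (simp add: Pc_def[abs_def])
  have s: "D1 \<Omega> (\<lambda>x. \<Sum>k\<in>UNIV. chr f m j k x * f b k x)"
    by (intro D1_sum(1) D1_mult C2_D1[OF C2_f] D1_chr) auto
  have "pd i (Pc j b m) x = pd i (pd j (f b m)) x + pd i (\<lambda>x. \<Sum>k\<in>UNIV. chr f m j k x * f b k x) x"
    unfolding e by (rule D1_add(2)[OF C2_D1pd[OF C2_f] s x])
  also have "pd i (\<lambda>x. \<Sum>k\<in>UNIV. chr f m j k x * f b k x) x = (\<Sum>k\<in>UNIV. pd i (\<lambda>x. chr f m j k x * f b k x) x)"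
    by (rule D1_sum(2)) (auto intro: D1_mult C2_D1[OF C2_f] D1_chr x)
  also have "\<dots> = (\<Sum>l\<in>UNIV. chr f m j l x * pd i (f b l) x + pd i (chr f m j l) x * f b l x)"
    by (rule sum.cong[OF refl]) (rule pd_mult[OF D1_chr C2_D1[OF C2_f] x])
  finally show ?thesis .
qed

lemma pd_w: "x \<in> \<Omega> \<Longrightarrow> pd i (w j a b) x = (\<Sum>m\<in>UNIV. f_co f a m x * pd i (Pc j b m) x + pd i (f_co f a m) x * Pc j b m x)"
proof -
  assume x: "x \<in> \<Omega>"
  have "pd i (w j a b) x = (\<Sum>m\<in>UNIV. pd i (\<lambda>x. f_co f a m x * Pc j b m x) x)"
    unfolding w_def[abs_def] by (rule D1_sum(2)) (auto intro: D1_mult C2_D1[OF C2_fco] D1_Pc x)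
  also have "\<dots> = (\<Sum>m\<in>UNIV. f_co f a m x * pd i (Pc j b m) x + pd i (f_co f a m) x * Pc j b m x)"
    by (rule sum.cong[OF refl]) (rule pd_mult[OF C2_D1[OF C2_fco] D1_Pc x])
  finally show ?thesis .
qed

lemma contr: "x \<in> \<Omega> \<Longrightarrow> (\<Sum>c\<in>UNIV. f_co f c m x * (Pc i c n x - pd i (f c n) x)) = chr f n i m x"
proof -
  assume x: "x \<in> \<Omega>"
  have "(\<Sum>c\<in>UNIV. f_co f c m x * (Pc i c n x - pd i (f c n) x))
      = (\<Sum>l\<in>UNIV. (\<Sum>c\<in>UNIV. f c l x * f_co f c m x) * chr f n i l x)"
    by (simp add: Pc_def sum_3 algebra_simps)
  also have "\<dots> = chr f n i m x" by (simp add: Fr2[OF x] if_distrib[of "\<lambda>z. z * _"] sum.delta sum.delta' cong: if_cong)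
  finally show ?thesis .
qed

definition "Wc i j a b x = pd i (w j a b) x - pd j (w i a b) x + (\<Sum>d\<in>UNIV. w i a d x * w j d b x - w j a d x * w i d b x)"
definition "Rm m k i j x = pd i (chr f m j k) x - pd j (chr f m i k) x
   + (\<Sum>n\<in>UNIV. chr f m i n x * chr f n j k x - chr f m j n x * chr f n i k x)"

lemma Xlem: "x \<in> \<Omega> \<Longrightarrow> (\<Sum>m\<in>UNIV. pd i (f_co f a m) x * Pc j b m x) + (\<Sum>d\<in>UNIV. w i a d x * w j d b x)
   = (\<Sum>m\<in>UNIV. \<Sum>n\<in>UNIV. f_co f a n x * Pc j b m x * chr f n i m x)"
proof -
  assume x: "x \<in> \<Omega>"
  have "(\<Sum>m\<in>UNIV. pd i (f_co f a m) x * Pc j b m x) + (\<Sum>d\<in>UNIV. w i a d x * w j d b x)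
     = (\<Sum>m\<in>UNIV. \<Sum>n\<in>UNIV. f_co f a n x * Pc j b m x * (\<Sum>c\<in>UNIV. f_co f c m x * (Pc i c n x - pd i (f c n) x)))"
    unfolding pd_Th[OF x] w_def by (simp add: sum_3 algebra_simps)
  then show ?thesis by (simp add: contr[OF x])
qed

lemma cartan: "x \<in> \<Omega> \<Longrightarrow> Wc i j a b x = (\<Sum>m\<in>UNIV. \<Sum>k\<in>UNIV. f_co f a m x * f b k x * Rm m k i j x)"
proof -
  assume x: "x \<in> \<Omega>"
  have sw: "pd i (pd j (f b m)) x = pd j (pd i (f b m)) x" for m
    by (rule smooth_pd_schwarz[OF opn sm x])
  have "Wc i j a b x = ((\<Sum>m\<in>UNIV. pd i (f_co f a m) x * Pc j b m x) + (\<Sum>d\<in>UNIV. w i a d x * w j d b x))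
      - ((\<Sum>m\<in>UNIV. pd j (f_co f a m) x * Pc i b m x) + (\<Sum>d\<in>UNIV. w j a d x * w i d b x))
      + (\<Sum>m\<in>UNIV. f_co f a m x * (pd i (Pc j b m) x - pd j (Pc i b m) x))"
    unfolding Wc_def pd_w[OF x] by (simp add: sum.distrib sum_subtractf algebra_simps)
  also have "\<dots> = (\<Sum>m\<in>UNIV. \<Sum>k\<in>UNIV. f_co f a m x * f b k x * Rm m k i j x)"
    unfolding Xlem[OF x] pd_Pc[OF x] sw
    by (simp add: Rm_def Pc_def sum_3 algebra_simps)
  finally show ?thesis .
qed

end

lemmas mm_add_left = bounded_bilinear.add_left[OF bil_mm]
lemmas mm_add_right = bounded_bilinear.add_right[OF bil_mm]
lemmas mm_diff_left = bounded_bilinear.diff_left[OF bil_mm]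
lemmas mm_diff_right = bounded_bilinear.diff_right[OF bil_mm]
lemmas mm_sum_left = bounded_bilinear.sum_left[OF bil_mm]
lemmas mm_sum_right = bounded_bilinear.sum_right[OF bil_mm]
lemmas mm_scaleR_left = bounded_bilinear.scaleR_left[OF bil_mm]
lemmas mm_scaleR_right = bounded_bilinear.scaleR_right[OF bil_mm]
lemmas mm_minus_left = bounded_bilinear.minus_left[OF bil_mm]
lemmas mm_minus_right = bounded_bilinear.minus_right[OF bil_mm]
lemmas mmL = mm_add_left mm_add_right mm_diff_left mm_diff_right mm_sum_left mm_sum_right
  mm_scaleR_left mm_scaleR_right mm_minus_left mm_minus_right

lemma L_sc: "(\<Sum>c\<in>(UNIV::3 set). r c *\<^sub>R (\<Sum>b\<in>(UNIV::3 set). s c b *\<^sub>R M b)) = (\<Sum>b\<in>UNIV. (\<Sum>c\<in>UNIV. r c * s c b) *\<^sub>R (M b :: 'a::real_vector))"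
proof -
  have "(\<Sum>c\<in>(UNIV::3 set). r c *\<^sub>R (\<Sum>b\<in>(UNIV::3 set). s c b *\<^sub>R M b)) = (\<Sum>c\<in>UNIV. \<Sum>b\<in>UNIV. (r c * s c b) *\<^sub>R M b)"
    by (simp add: scaleR_sum_right)
  also have "\<dots> = (\<Sum>b\<in>UNIV. \<Sum>c\<in>UNIV. (r c * s c b) *\<^sub>R M b)" by (rule sum.swap)
  also have "\<dots> = (\<Sum>b\<in>UNIV. (\<Sum>c\<in>UNIV. r c * s c b) *\<^sub>R M b)" by (simp add: scaleR_sum_left)
  finally show ?thesis .
qed

lemma sum_sc_cong: "(\<And>b. c b = d b) \<Longrightarrow> (\<Sum>b\<in>A. c b *\<^sub>R M b) = (\<Sum>b\<in>A. d b *\<^sub>R M b)"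
  by simp

context frame begin

definition "Om j x = (\<Sum>a\<in>UNIV. \<Sum>b\<in>UNIV. (alpha_conn f j a b x / 8) *\<^sub>R Cm a b)"
definition "Gc j x = (\<Sum>a\<in>UNIV. f a j x *\<^sub>R gamma_up a)"

lemma Dsp_eq: "Dsp f j U x = pd j U x + Om j x *v U x"
  by (simp add: Dsp_def Om_def Cm_def)

lemma comm_Om_g: "x \<in> \<Omega> \<Longrightarrow> Om i x ** gamma_up c - gamma_up c ** Om i x = (\<Sum>b\<in>UNIV. (- w i c b x) *\<^sub>R gamma_up b)"
proof -
  assume x: "x \<in> \<Omega>"
  have "Om i x ** gamma_up c - gamma_up c ** Om i x = (\<Sum>b\<in>UNIV. (4 * (alpha_conn f i c b x / 8 - alpha_conn f i b c x / 8)) *\<^sub>R gamma_up b)"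
    unfolding Om_def by (rule comm_g)
  also have "\<dots> = (\<Sum>b\<in>UNIV. (- w i c b x) *\<^sub>R gamma_up b)"
  proof (rule sum_sc_cong)
    fix b show "4 * (alpha_conn f i c b x / 8 - alpha_conn f i b c x / 8) = - w i c b x"
      using w_anti[OF x, of i b c] by (simp add: alpha_w[OF x])
  qed
  finally show ?thesis .
qed

lemma fw: "x \<in> \<Omega> \<Longrightarrow> (\<Sum>c\<in>UNIV. f c j x * w i c b x) = Pc i b j x"
proof -
  assume x: "x \<in> \<Omega>"
  have "(\<Sum>c\<in>UNIV. f c j x * w i c b x) = (\<Sum>l\<in>UNIV. (\<Sum>c\<in>UNIV. f c j x * f_co f c l x) * Pc i b l x)"
    by (simp add: w_def sum_3 algebra_simps)
  also have "\<dots> = Pc i b j x"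
    by (simp add: Fr2[OF x] if_distrib[of "\<lambda>z. z * _"] sum.delta sum.delta' cong: if_cong)
  finally show ?thesis .
qed

lemma pd_Gc: "x \<in> \<Omega> \<Longrightarrow> pd i (Gc j) x = (\<Sum>a\<in>UNIV. pd i (f a j) x *\<^sub>R gamma_up a)"
proof -
  assume x: "x \<in> \<Omega>"
  have "pd i (Gc j) x = (\<Sum>a\<in>UNIV. pd i (\<lambda>x. f a j x *\<^sub>R gamma_up a) x)"
    unfolding Gc_def[abs_def]
    by (rule D1_sum(2)) (auto intro: D1_lin(1)[OF bounded_linear_scaleR_left] C2_D1[OF C2_f] x)
  also have "\<dots> = (\<Sum>a\<in>UNIV. pd i (f a j) x *\<^sub>R gamma_up a)"
    by (rule sum.cong[OF refl]) (rule D1_lin(2)[OF bounded_linear_scaleR_left C2_D1[OF C2_f] x])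
  finally show ?thesis .
qed

lemma D1_Gc: "D1 \<Omega> (Gc j)"
  unfolding Gc_def[abs_def]
  by (rule D1_sum(1)) (auto intro: D1_lin(1)[OF bounded_linear_scaleR_left] C2_D1[OF C2_f])

lemma compat: "x \<in> \<Omega> \<Longrightarrow> pd i (Gc j) x + (Om i x ** Gc j x - Gc j x ** Om i x) = - (\<Sum>k\<in>UNIV. chr f j i k x *\<^sub>R Gc k x)"
proof -
  assume x: "x \<in> \<Omega>"
  have "Om i x ** Gc j x - Gc j x ** Om i x = (\<Sum>c\<in>UNIV. f c j x *\<^sub>R (Om i x ** gamma_up c - gamma_up c ** Om i x))"
    unfolding Gc_def by (simp add: mmL sum_subtractf scaleR_diff_right)
  also have "\<dots> = (\<Sum>c\<in>UNIV. f c j x *\<^sub>R (\<Sum>b\<in>UNIV. (- w i c b x) *\<^sub>R gamma_up b))"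
    by (simp add: comm_Om_g[OF x])
  also have "\<dots> = (\<Sum>b\<in>UNIV. (\<Sum>c\<in>UNIV. f c j x * (- w i c b x)) *\<^sub>R gamma_up b)" by (rule L_sc)
  also have "\<dots> = (\<Sum>b\<in>UNIV. (- Pc i b j x) *\<^sub>R gamma_up b)"
    by (rule sum_sc_cong) (simp add: fw[OF x, symmetric] sum_negf)
  finally have A: "Om i x ** Gc j x - Gc j x ** Om i x = (\<Sum>b\<in>UNIV. (- Pc i b j x) *\<^sub>R gamma_up b)" .
  have "pd i (Gc j) x + (Om i x ** Gc j x - Gc j x ** Om i x) = (\<Sum>b\<in>UNIV. (pd i (f b j) x - Pc i b j x) *\<^sub>R gamma_up b)"
    unfolding A pd_Gc[OF x] by (simp add: sum.distrib[symmetric] scaleR_left_diff_distrib)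
  also have "\<dots> = (\<Sum>b\<in>UNIV. (\<Sum>k\<in>UNIV. (- chr f j i k x) * f b k x) *\<^sub>R gamma_up b)"
    by (rule sum_sc_cong) (simp add: Pc_def sum_negf)
  also have "\<dots> = (\<Sum>k\<in>UNIV. (- chr f j i k x) *\<^sub>R (\<Sum>b\<in>UNIV. f b k x *\<^sub>R gamma_up b))"
    by (rule L_sc[symmetric])
  also have "\<dots> = - (\<Sum>k\<in>UNIV. chr f j i k x *\<^sub>R Gc k x)"
    by (simp add: Gc_def sum_negf)
  finally show ?thesis .
qed

end

lemma swap4: "(\<Sum>i\<in>A. \<Sum>j\<in>B. \<Sum>c\<in>C. \<Sum>d\<in>D. X i j c d) = (\<Sum>c\<in>C. \<Sum>d\<in>D. \<Sum>i\<in>A. \<Sum>j\<in>B. (X i j c d :: 'a::comm_monoid_add))"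
proof -
  have "(\<Sum>i\<in>A. \<Sum>j\<in>B. \<Sum>c\<in>C. \<Sum>d\<in>D. X i j c d) = (\<Sum>i\<in>A. \<Sum>c\<in>C. \<Sum>j\<in>B. \<Sum>d\<in>D. X i j c d)"
    by (rule sum.cong[OF refl], rule sum.swap)
  also have "\<dots> = (\<Sum>i\<in>A. \<Sum>c\<in>C. \<Sum>d\<in>D. \<Sum>j\<in>B. X i j c d)"
    by (rule sum.cong[OF refl], rule sum.cong[OF refl], rule sum.swap)
  also have "\<dots> = (\<Sum>c\<in>C. \<Sum>i\<in>A. \<Sum>d\<in>D. \<Sum>j\<in>B. X i j c d)" by (rule sum.swap)
  also have "\<dots> = (\<Sum>c\<in>C. \<Sum>d\<in>D. \<Sum>i\<in>A. \<Sum>j\<in>B. X i j c d)"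
    by (rule sum.cong[OF refl], rule sum.swap)
  finally show ?thesis .
qed

lemma rot3: "(\<Sum>k\<in>A. \<Sum>i\<in>B. \<Sum>j\<in>C. X k i j) = (\<Sum>i\<in>B. \<Sum>j\<in>C. \<Sum>k\<in>A. (X k i j :: 'a::comm_monoid_add))"
proof -
  have "(\<Sum>k\<in>A. \<Sum>i\<in>B. \<Sum>j\<in>C. X k i j) = (\<Sum>i\<in>B. \<Sum>k\<in>A. \<Sum>j\<in>C. X k i j)" by (rule sum.swap)
  also have "\<dots> = (\<Sum>i\<in>B. \<Sum>j\<in>C. \<Sum>k\<in>A. X k i j)" by (rule sum.cong[OF refl], rule sum.swap)
  finally show ?thesis .
qed

lemma lin8: "bounded_linear (\<lambda>r::real. (r / 8) *\<^sub>R (C::'a::real_normed_vector))"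
  unfolding linear_conv_bounded_linear[symmetric] by (auto simp: linear_iff add_divide_distrib scaleR_add_left)

context frame begin

lemma pd_alpha: "x \<in> \<Omega> \<Longrightarrow> pd i (alpha_conn f j a b) x = - pd i (w j a b) x"
proof -
  assume x: "x \<in> \<Omega>"
  have "pd i (alpha_conn f j a b) x = pd i (\<lambda>y. - w j a b y) x"
    by (rule pd_local[OF opn x]) (simp add: alpha_w)
  then show ?thesis using D1_minus(2)[OF D1_w x] by simp
qed

lemma D1_alpha: "D1 \<Omega> (alpha_conn f j a b)"
  by (rule D1_local[OF opn D1_minus(1)[OF D1_w]]) (simp add: alpha_w)

lemma D1_Om: "D1 \<Omega> (Om j)"
  unfolding Om_def[abs_def]
  by (intro D1_sum(1) D1_lin(1)[OF lin8] D1_alpha) auto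

lemma pd_Om: "x \<in> \<Omega> \<Longrightarrow> pd i (Om j) x = (\<Sum>a\<in>UNIV. \<Sum>b\<in>UNIV. (- pd i (w j a b) x / 8) *\<^sub>R Cm a b)"
proof -
  assume x: "x \<in> \<Omega>"
  have "pd i (Om j) x = (\<Sum>a\<in>UNIV. pd i (\<lambda>y. \<Sum>b\<in>UNIV. (alpha_conn f j a b y / 8) *\<^sub>R Cm a b) x)"
    unfolding Om_def[abs_def]
    by (rule D1_sum(2)) (auto intro!: D1_sum(1) D1_lin(1)[OF lin8] D1_alpha x)
  also have "\<dots> = (\<Sum>a\<in>UNIV. \<Sum>b\<in>UNIV. pd i (\<lambda>y. (alpha_conn f j a b y / 8) *\<^sub>R Cm a b) x)"
    by (rule sum.cong[OF refl], rule D1_sum(2)) (auto intro!: D1_lin(1)[OF lin8] D1_alpha x)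
  also have "\<dots> = (\<Sum>a\<in>UNIV. \<Sum>b\<in>UNIV. (- pd i (w j a b) x / 8) *\<^sub>R Cm a b)"
    by (intro sum.cong refl) (simp add: D1_lin(2)[OF lin8 D1_alpha x] pd_alpha[OF x])
  finally show ?thesis .
qed

definition "K i j x = pd i (Om j) x - pd j (Om i) x + (Om i x ** Om j x - Om j x ** Om i x)"

lemma K_eq: "x \<in> \<Omega> \<Longrightarrow> K i j x = (\<Sum>a\<in>UNIV. \<Sum>b\<in>UNIV. (- (1/8) * Wc i j a b x) *\<^sub>R Cm a b)"
proof -
  assume x: "x \<in> \<Omega>"
  have cc: "Om i x ** Om j x - Om j x ** Om i x = (\<Sum>a\<in>UNIV. \<Sum>b\<in>UNIV.
      (-8 * (\<Sum>d\<in>UNIV. alpha_conn f i a d x / 8 * (alpha_conn f j d b x / 8) - alpha_conn f j a d x / 8 * (alpha_conn f i d b x / 8))) *\<^sub>R Cm a b)"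
    unfolding Om_def
  proof (rule comm_CC)
    fix a b
    show "alpha_conn f i a b x / 8 = - (alpha_conn f i b a x / 8)"
      using w_anti[OF x, of i a b] by (simp add: alpha_w[OF x])
    show "alpha_conn f j a b x / 8 = - (alpha_conn f j b a x / 8)"
      using w_anti[OF x, of j a b] by (simp add: alpha_w[OF x])
  qed
  have comb: "\<And>p q r. (\<Sum>a\<in>UNIV. \<Sum>b\<in>UNIV. p a b *\<^sub>R Cm a b) - (\<Sum>a\<in>UNIV. \<Sum>b\<in>UNIV. q a b *\<^sub>R Cm a b)
     + (\<Sum>a\<in>UNIV. \<Sum>b\<in>UNIV. r a b *\<^sub>R Cm a b) = (\<Sum>a\<in>UNIV. \<Sum>b\<in>UNIV. (p a b - q a b + r a b) *\<^sub>R Cm a b)"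
    by (simp add: sum_subtractf[symmetric] sum.distrib[symmetric] scaleR_diff_left scaleR_add_left)
  have co: "- pd i (w j a b) x / 8 - - pd j (w i a b) x / 8 + -8 * (\<Sum>d\<in>UNIV. alpha_conn f i a d x / 8 * (alpha_conn f j d b x / 8)
      - alpha_conn f j a d x / 8 * (alpha_conn f i d b x / 8)) = - (1/8) * Wc i j a b x" for a b
  proof -
    have "(\<Sum>d\<in>UNIV. alpha_conn f i a d x / 8 * (alpha_conn f j d b x / 8) - alpha_conn f j a d x / 8 * (alpha_conn f i d b x / 8))
       = (1/64) * (\<Sum>d\<in>UNIV. w i a d x * w j d b x - w j a d x * w i d b x)"
      by (simp add: alpha_w[OF x] sum_distrib_left algebra_simps)
    then show ?thesis by (simp add: Wc_def algebra_simps)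
  qed
  show ?thesis
    unfolding K_def pd_Om[OF x] cc comb co by (rule refl)
qed

end

context frame begin

definition "Wf c d a b x = (\<Sum>i\<in>UNIV. \<Sum>j\<in>UNIV. f c i x * f d j x * Wc i j a b x)"
definition "T m b c d x = (\<Sum>k\<in>UNIV. \<Sum>i\<in>UNIV. \<Sum>j\<in>UNIV. f b k x * f c i x * f d j x * Rm m k i j x)"

lemma Wc_anti_ij: "Wc j i a b x = - Wc i j a b x"
  by (simp add: Wc_def sum_subtractf algebra_simps)

lemma Wc_anti_ab: "x \<in> \<Omega> \<Longrightarrow> Wc i j b a x = - Wc i j a b x"
proof -
  assume x: "x \<in> \<Omega>"
  have p: "pd i (w j b a) x = - pd i (w j a b) x" for i j
  proof -
    have "pd i (w j b a) x = pd i (\<lambda>y. - w j a b y) x"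
      by (rule pd_local[OF opn x]) (simp add: w_anti[of _ j b a])
    then show ?thesis using D1_minus(2)[OF D1_w x] by simp
  qed
  have s: "(\<Sum>d\<in>UNIV. w i b d x * w j d a x - w j b d x * w i d a x) = - (\<Sum>d\<in>UNIV. w i a d x * w j d b x - w j a d x * w i d b x)"
  proof -
    have "(\<Sum>d\<in>UNIV. w i b d x * w j d a x - w j b d x * w i d a x) = (\<Sum>d\<in>UNIV. w j a d x * w i d b x - w i a d x * w j d b x)"
    proof (rule sum.cong[OF refl])
      fix d
      have e1: "w i b d x = - w i d b x" using w_anti[OF x, of i b d] .
      have e2: "w j d a x = - w j a d x" using w_anti[OF x, of j d a] .
      have e3: "w j b d x = - w j d b x" using w_anti[OF x, of j b d] .
      have e4: "w i d a x = - w i a d x" using w_anti[OF x, of i d a] .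
      show "w i b d x * w j d a x - w j b d x * w i d a x = w j a d x * w i d b x - w i a d x * w j d b x"
        unfolding e1 e2 e3 e4 by (simp add: algebra_simps)
    qed
    also have "\<dots> = - (\<Sum>d\<in>UNIV. w i a d x * w j d b x - w j a d x * w i d b x)"
      by (simp add: sum_negf[symmetric] algebra_simps)
    finally show ?thesis .
  qed
  show ?thesis unfolding Wc_def p s by simp
qed

lemma Wf_acd: "Wf d c a b x = - Wf c d a b x"
proof -
  have "Wf d c a b x = (\<Sum>j\<in>UNIV. \<Sum>i\<in>UNIV. f d j x * f c i x * Wc j i a b x)" by (simp add: Wf_def)
  also have "\<dots> = (\<Sum>i\<in>UNIV. \<Sum>j\<in>UNIV. f d j x * f c i x * Wc j i a b x)" by (rule sum.swap)
  also have "\<dots> = (\<Sum>i\<in>UNIV. \<Sum>j\<in>UNIV. - (f c i x * f d j x * Wc i j a b x))"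
    by (intro sum.cong refl) (subst Wc_anti_ij, simp)
  also have "\<dots> = - Wf c d a b x" by (simp add: Wf_def sum_negf)
  finally show ?thesis .
qed

lemma Wf_aab: "x \<in> \<Omega> \<Longrightarrow> Wf c d b a x = - Wf c d a b x"
  by (simp add: Wf_def Wc_anti_ab[of x _ _ b a] sum_negf[symmetric])

lemma Rm_bianchi: "x \<in> \<Omega> \<Longrightarrow> Rm m k i j x + Rm m i j k x + Rm m j k i x = 0"
proof -
  assume x: "x \<in> \<Omega>"
  have e: "Rm m k i j x + Rm m i j k x + Rm m j k i x = (pd i (chr f m j k) x - pd i (chr f m k j) x)
     + (pd j (chr f m k i) x - pd j (chr f m i k) x) + (pd k (chr f m i j) x - pd k (chr f m j i) x)
     + (\<Sum>n\<in>UNIV. chr f m i n x * (chr f n j k x - chr f n k j x) + chr f m j n x * (chr f n k i x - chr f n i k x)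
          + chr f m k n x * (chr f n i j x - chr f n j i x))"
    by (simp add: Rm_def sum_3 algebra_simps)
  show ?thesis unfolding e
    by (simp add: chr_pd_sym[OF x, of i m j k] chr_pd_sym[OF x, of j m k i] chr_pd_sym[OF x, of k m i j]
       chr_sym[OF x, of _ j k] chr_sym[OF x, of _ k i] chr_sym[OF x, of _ i j])
qed

lemma Wf_T: "x \<in> \<Omega> \<Longrightarrow> Wf c d a b x = (\<Sum>m\<in>UNIV. f_co f a m x * T m b c d x)"
proof -
  assume x: "x \<in> \<Omega>"
  have "Wf c d a b x = (\<Sum>i\<in>UNIV. \<Sum>j\<in>UNIV. \<Sum>m\<in>UNIV. \<Sum>k\<in>UNIV. f c i x * f d j x * (f_co f a m x * f b k x * Rm m k i j x))"
    by (simp add: Wf_def cartan[OF x] sum_distrib_left)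
  also have "\<dots> = (\<Sum>m\<in>UNIV. \<Sum>k\<in>UNIV. \<Sum>i\<in>UNIV. \<Sum>j\<in>UNIV. f c i x * f d j x * (f_co f a m x * f b k x * Rm m k i j x))"
    by (rule swap4)
  also have "\<dots> = (\<Sum>m\<in>UNIV. f_co f a m x * T m b c d x)"
    by (simp add: T_def sum_distrib_left mult_ac)
  finally show ?thesis .
qed

lemma Wf_bianchi: "x \<in> \<Omega> \<Longrightarrow> Wf c d a b x + Wf d b a c x + Wf b c a d x = 0"
proof -
  assume x: "x \<in> \<Omega>"
  have t2: "T m c d b x = (\<Sum>k\<in>UNIV. \<Sum>i\<in>UNIV. \<Sum>j\<in>UNIV. f b k x * f c i x * f d j x * Rm m i j k x)" for m
  proof -
    have "T m c d b x = (\<Sum>i\<in>UNIV. \<Sum>j\<in>UNIV. \<Sum>k\<in>UNIV. f b k x * f c i x * f d j x * Rm m i j k x)"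
      unfolding T_def by (simp add: mult_ac)
    also have "\<dots> = (\<Sum>k\<in>UNIV. \<Sum>i\<in>UNIV. \<Sum>j\<in>UNIV. f b k x * f c i x * f d j x * Rm m i j k x)"
      by (rule rot3[symmetric])
    finally show ?thesis .
  qed
  have t3: "T m d b c x = (\<Sum>k\<in>UNIV. \<Sum>i\<in>UNIV. \<Sum>j\<in>UNIV. f b k x * f c i x * f d j x * Rm m j k i x)" for m
  proof -
    have "T m d b c x = (\<Sum>j\<in>UNIV. \<Sum>k\<in>UNIV. \<Sum>i\<in>UNIV. f b k x * f c i x * f d j x * Rm m j k i x)"
      unfolding T_def by (simp add: mult_ac)
    also have "\<dots> = (\<Sum>k\<in>UNIV. \<Sum>i\<in>UNIV. \<Sum>j\<in>UNIV. f b k x * f c i x * f d j x * Rm m j k i x)"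
      by (rule rot3)
    finally show ?thesis .
  qed
  have "T m b c d x + T m c d b x + T m d b c x = 0" for m
  proof -
    have "T m b c d x + T m c d b x + T m d b c x = (\<Sum>k\<in>UNIV. \<Sum>i\<in>UNIV. \<Sum>j\<in>UNIV.
        f b k x * f c i x * f d j x * (Rm m k i j x + Rm m i j k x + Rm m j k i x))"
      unfolding t2 t3 unfolding T_def by (simp add: sum.distrib[symmetric] algebra_simps)
    then show ?thesis by (simp add: Rm_bianchi[OF x])
  qed
  then show ?thesis
    by (simp add: Wf_T[OF x] sum.distrib[symmetric] distrib_left[symmetric])
qed

lemma ricci_Rm: "x \<in> \<Omega> \<Longrightarrow> ricci f k j x = (\<Sum>i\<in>UNIV. Rm i k i j x)"
  by (simp add: ricci_def Rm_def chr_sym[of x] chr_pd_sym[of x] sum_3 algebra_simps)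

lemma fWc: "x \<in> \<Omega> \<Longrightarrow> (\<Sum>a\<in>UNIV. f a i x * Wc i j a c x) = (\<Sum>k\<in>UNIV. f c k x * Rm i k i j x)"
proof -
  assume x: "x \<in> \<Omega>"
  have "(\<Sum>a\<in>UNIV. f a i x * Wc i j a c x) = (\<Sum>m\<in>UNIV. (\<Sum>a\<in>UNIV. f a i x * f_co f a m x) * (\<Sum>k\<in>UNIV. f c k x * Rm m k i j x))"
    by (simp add: cartan[OF x] sum_3 algebra_simps)
  also have "\<dots> = (\<Sum>k\<in>UNIV. f c k x * Rm i k i j x)"
    by (simp add: Fr2[OF x] sdelta)
  finally show ?thesis .
qed

lemma Wf_scal: "x \<in> \<Omega> \<Longrightarrow> (\<Sum>a\<in>UNIV. \<Sum>c\<in>UNIV. Wf a c a c x) = scal f x"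
proof -
  assume x: "x \<in> \<Omega>"
  have inner: "(\<Sum>a\<in>UNIV. \<Sum>c\<in>UNIV. f a i x * f c j x * Wc i j a c x) = (\<Sum>c\<in>UNIV. f c j x * (\<Sum>a\<in>UNIV. f a i x * Wc i j a c x))" for i j
  proof -
    have "(\<Sum>a\<in>UNIV. \<Sum>c\<in>UNIV. f a i x * f c j x * Wc i j a c x) = (\<Sum>c\<in>UNIV. \<Sum>a\<in>UNIV. f a i x * f c j x * Wc i j a c x)"
      by (rule sum.swap)
    also have "\<dots> = (\<Sum>c\<in>UNIV. f c j x * (\<Sum>a\<in>UNIV. f a i x * Wc i j a c x))"
      by (simp add: sum_distrib_left mult_ac)
    finally show ?thesis .
  qed
  have "(\<Sum>a\<in>UNIV. \<Sum>c\<in>UNIV. Wf a c a c x) = (\<Sum>a\<in>UNIV. \<Sum>c\<in>UNIV. \<Sum>i\<in>UNIV. \<Sum>j\<in>UNIV. f a i x * f c j x * Wc i j a c x)"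
    by (simp add: Wf_def)
  also have "\<dots> = (\<Sum>i\<in>UNIV. \<Sum>j\<in>UNIV. \<Sum>a\<in>UNIV. \<Sum>c\<in>UNIV. f a i x * f c j x * Wc i j a c x)"
    by (rule swap4)
  also have "\<dots> = (\<Sum>i\<in>UNIV. \<Sum>j\<in>UNIV. \<Sum>c\<in>UNIV. f c j x * (\<Sum>a\<in>UNIV. f a i x * Wc i j a c x))"
    by (rule sum.cong[OF refl], rule sum.cong[OF refl], rule inner)
  also have "\<dots> = (\<Sum>i\<in>UNIV. \<Sum>j\<in>UNIV. \<Sum>k\<in>UNIV. hinv f j k x * Rm i k i j x)"
    by (rule sum.cong[OF refl], rule sum.cong[OF refl]) (simp add: fWc[OF x] hinv_def sum_3 algebra_simps)
  also have "\<dots> = (\<Sum>j\<in>UNIV. \<Sum>k\<in>UNIV. hinv f j k x * (\<Sum>i\<in>UNIV. Rm i k i j x))"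
    by (simp add: sum_3 algebra_simps)
  also have "\<dots> = scal f x"
    by (simp add: scal_def ricci_Rm[OF x] hinv_sym sum_3 algebra_simps)
  finally show ?thesis .
qed

end

context frame begin

lemma contraction: "x \<in> \<Omega> \<Longrightarrow> (\<Sum>i\<in>UNIV. \<Sum>j\<in>UNIV. Gc i x ** Gc j x ** K i j x) = (scal f x / 2) *\<^sub>R mat 1"
proof -
  assume x: "x \<in> \<Omega>"
  have g1: "(\<Sum>i\<in>UNIV. \<Sum>j\<in>UNIV. Gc i x ** Gc j x ** K i j x)
     = (\<Sum>i\<in>UNIV. \<Sum>j\<in>UNIV. \<Sum>d\<in>UNIV. \<Sum>c\<in>UNIV. (f d j x * f c i x) *\<^sub>R (gamma_up c ** gamma_up d ** K i j x))"
    by (simp add: Gc_def mmL scaleR_sum_right)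
  also have "\<dots> = (\<Sum>i\<in>UNIV. \<Sum>j\<in>UNIV. \<Sum>c\<in>UNIV. \<Sum>d\<in>UNIV. (f c i x * f d j x) *\<^sub>R (gamma_up c ** gamma_up d ** K i j x))"
    by (rule sum.cong[OF refl], rule sum.cong[OF refl], subst sum.swap, simp add: mult.commute)
  also have "\<dots> = (\<Sum>c\<in>UNIV. \<Sum>d\<in>UNIV. \<Sum>i\<in>UNIV. \<Sum>j\<in>UNIV. (f c i x * f d j x) *\<^sub>R (gamma_up c ** gamma_up d ** K i j x))"
    by (rule swap4)
  also have "\<dots> = (\<Sum>c\<in>UNIV. \<Sum>d\<in>UNIV. gamma_up c ** gamma_up d ** (\<Sum>i\<in>UNIV. \<Sum>j\<in>UNIV. (f c i x * f d j x) *\<^sub>R K i j x))"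
    by (simp add: mmL)
  also have "\<dots> = (\<Sum>c\<in>UNIV. \<Sum>d\<in>UNIV. gamma_up c ** gamma_up d ** (\<Sum>a\<in>UNIV. \<Sum>b\<in>UNIV. (- (1/8) * Wf c d a b x) *\<^sub>R Cm a b))"
  proof (rule sum.cong[OF refl], rule sum.cong[OF refl])
    fix c d
    have "(\<Sum>i\<in>UNIV. \<Sum>j\<in>UNIV. (f c i x * f d j x) *\<^sub>R K i j x)
        = (\<Sum>i\<in>UNIV. \<Sum>j\<in>UNIV. \<Sum>a\<in>UNIV. \<Sum>b\<in>UNIV. (f c i x * f d j x * (- (1/8) * Wc i j a b x)) *\<^sub>R Cm a b)"
      by (simp add: K_eq[OF x] scaleR_sum_right)
    also have "\<dots> = (\<Sum>a\<in>UNIV. \<Sum>b\<in>UNIV. \<Sum>i\<in>UNIV. \<Sum>j\<in>UNIV. (f c i x * f d j x * (- (1/8) * Wc i j a b x)) *\<^sub>R Cm a b)"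
      by (rule swap4)
    also have "\<dots> = (\<Sum>a\<in>UNIV. \<Sum>b\<in>UNIV. (\<Sum>i\<in>UNIV. \<Sum>j\<in>UNIV. f c i x * f d j x * (- (1/8) * Wc i j a b x)) *\<^sub>R Cm a b)"
      by (simp only: scaleR_sum_left)
    also have "\<dots> = (\<Sum>a\<in>UNIV. \<Sum>b\<in>UNIV. (- (1/8) * Wf c d a b x) *\<^sub>R Cm a b)"
      by (simp add: Wf_def sum_distrib_left mult_ac)
    finally show "gamma_up c ** gamma_up d ** (\<Sum>i\<in>UNIV. \<Sum>j\<in>UNIV. (f c i x * f d j x) *\<^sub>R K i j x)
      = gamma_up c ** gamma_up d ** (\<Sum>a\<in>UNIV. \<Sum>b\<in>UNIV. (- (1/8) * Wf c d a b x) *\<^sub>R Cm a b)" by simp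
  qed
  also have "\<dots> = (\<Sum>c\<in>UNIV. \<Sum>d\<in>UNIV. \<Sum>a\<in>UNIV. \<Sum>b\<in>UNIV. (- (1/8) * Wf c d a b x) *\<^sub>R (gamma_up c ** gamma_up d ** Cm a b))"
    by (simp add: mmL)
  also have "\<dots> = (\<Sum>a\<in>UNIV. \<Sum>b\<in>UNIV. \<Sum>c\<in>UNIV. \<Sum>d\<in>UNIV. (- (1/8) * Wf c d a b x) *\<^sub>R (gamma_up c ** gamma_up d ** Cm a b))"
    by (rule swap4)
  also have "\<dots> = (- (1/8)) *\<^sub>R (\<Sum>a\<in>UNIV. \<Sum>b\<in>UNIV. \<Sum>c\<in>UNIV. \<Sum>d\<in>UNIV. Wf c d a b x *\<^sub>R (gamma_up c ** gamma_up d ** Cm a b))"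
    by (simp add: scaleR_sum_right)
  also have "\<dots> = (- (1/8)) *\<^sub>R ((-4 * (\<Sum>a\<in>UNIV. \<Sum>c\<in>UNIV. Wf a c a c x)) *\<^sub>R mat 1)"
  proof -
    have "(\<Sum>a\<in>UNIV. \<Sum>b\<in>UNIV. \<Sum>c\<in>UNIV. \<Sum>d\<in>UNIV. Wf c d a b x *\<^sub>R (gamma_up c ** gamma_up d ** Cm a b))
       = (-4 * (\<Sum>a\<in>UNIV. \<Sum>c\<in>UNIV. Wf a c a c x)) *\<^sub>R mat 1"
    proof (rule quad)
      fix a b c d
      show "Wf c d a b x = - Wf c d b a x" using Wf_aab[OF x, of c d a b] by simp
      show "Wf c d a b x = - Wf d c a b x" using Wf_acd[of d c a b x] by simp
      show "Wf c d a b x + Wf d b a c x + Wf b c a d x = 0" by (rule Wf_bianchi[OF x])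
    qed
    then show ?thesis by simp
  qed
  also have "\<dots> = (scal f x / 2) *\<^sub>R mat 1" by (simp add: Wf_scal[OF x])
  finally show ?thesis .
qed

end

lemmas mv_add_left = bounded_bilinear.add_left[OF bil_mv]
lemmas mv_add_right = bounded_bilinear.add_right[OF bil_mv]
lemmas mv_diff_left = bounded_bilinear.diff_left[OF bil_mv]
lemmas mv_diff_right = bounded_bilinear.diff_right[OF bil_mv]
lemmas mv_sum_left = bounded_bilinear.sum_left[OF bil_mv]
lemmas mv_sum_right = bounded_bilinear.sum_right[OF bil_mv]
lemmas mv_scaleR_left = bounded_bilinear.scaleR_left[OF bil_mv]
lemmas mv_scaleR_right = bounded_bilinear.scaleR_right[OF bil_mv]
lemmas mv_minus_left = bounded_bilinear.minus_left[OF bil_mv]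
lemmas mv_minus_right = bounded_bilinear.minus_right[OF bil_mv]
lemmas mvL = mv_add_left mv_add_right mv_diff_left mv_diff_right mv_sum_left mv_sum_right
  mv_scaleR_left mv_scaleR_right mv_minus_left mv_minus_right

lemma sm_mv: "(A::complex^4^4) *v (c *s v) = c *s (A *v v)"
  by (simp add: vec_eq_iff matrix_vector_mult_def sum_distrib_left algebra_simps)
lemma sm_add: "(c::complex) *s (v + w) = c *s v + c *s (w::complex^4)"
  by (simp add: vec_eq_iff algebra_simps)
lemma sm_diff: "(c::complex) *s (v - w) = c *s v - c *s (w::complex^4)"
  by (simp add: vec_eq_iff algebra_simps)
lemma sm_minus: "(c::complex) *s (- v) = - (c *s (v::complex^4))"
  by (simp add: vec_eq_iff algebra_simps)
lemma sm_sum: "(c::complex) *s (\<Sum>a\<in>A. v a) = (\<Sum>a\<in>A. c *s (v a :: complex^4))"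
  by (induction A rule: infinite_finite_induct) (simp_all add: sm_add vec_eq_iff)
lemma sm_scaleR: "(c::complex) *s (r *\<^sub>R v) = r *\<^sub>R (c *s (v::complex^4))"
  by (simp add: vec_eq_iff sR_cx algebra_simps)
lemma ii_sm: "\<i> *s (\<i> *s (v::complex^4)) = - v"
  by (simp add: vec_eq_iff)
lemmas smL = sm_mv sm_add sm_diff sm_minus sm_sum sm_scaleR

lemma lin_smult_const: "bounded_linear (\<lambda>(v::complex^4). c *s v)"
  by (rule lin_smult)

context frame begin

lemma Hcal_eq: "Hcal f V y = \<i> *s (\<Sum>j\<in>UNIV. Gc j y *v Dsp f j V y)"
proof -
  have "(\<Sum>a\<in>UNIV. \<Sum>j\<in>UNIV. f a j y *\<^sub>R (gamma_up a *v Dsp f j V y)) = (\<Sum>j\<in>UNIV. \<Sum>a\<in>UNIV. f a j y *\<^sub>R (gamma_up a *v Dsp f j V y))"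
    by (rule sum.swap)
  also have "\<dots> = (\<Sum>j\<in>UNIV. Gc j y *v Dsp f j V y)"
    by (simp add: Gc_def mvL)
  finally show ?thesis by (simp add: Hcal_def)
qed

lemma Dsp_fun: "Dsp f j V = (\<lambda>y. pd j V y + Om j y *v V y)"
  by (rule ext) (simp add: Dsp_eq)

lemma D1_Dsp: "D1 \<Omega> V \<Longrightarrow> D1 \<Omega> (pd j V) \<Longrightarrow> D1 \<Omega> (Dsp f j V)"
  unfolding Dsp_fun by (intro D1_add(1) D1_bil(1)[OF bil_mv] D1_Om)

lemma pd_Dsp: "D1 \<Omega> V \<Longrightarrow> D1 \<Omega> (pd j V) \<Longrightarrow> x \<in> \<Omega> \<Longrightarrow>
   pd i (Dsp f j V) x = pd i (pd j V) x + (Om j x *v pd i V x + pd i (Om j) x *v V x)"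
  unfolding Dsp_fun
  by (simp add: D1_add(2)[OF _ D1_bil(1)[OF bil_mv D1_Om]] D1_bil(2)[OF bil_mv D1_Om])

lemma D1_GcV: "(\<And>j. D1 \<Omega> (W j)) \<Longrightarrow> D1 \<Omega> (\<lambda>y. \<Sum>j\<in>UNIV. Gc j y *v W j y)"
  by (intro D1_sum(1) D1_bil(1)[OF bil_mv] D1_Gc) auto

lemma pd_GcV: "(\<And>j. D1 \<Omega> (W j)) \<Longrightarrow> x \<in> \<Omega> \<Longrightarrow>
   pd i (\<lambda>y. \<Sum>j\<in>UNIV. Gc j y *v W j y) x = (\<Sum>j\<in>UNIV. Gc j x *v pd i (W j) x + pd i (Gc j) x *v W j x)"
proof -
  assume W: "\<And>j. D1 \<Omega> (W j)" and x: "x \<in> \<Omega>"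
  have "pd i (\<lambda>y. \<Sum>j\<in>UNIV. Gc j y *v W j y) x = (\<Sum>j\<in>UNIV. pd i (\<lambda>y. Gc j y *v W j y) x)"
    by (rule D1_sum(2)) (auto intro: D1_bil(1)[OF bil_mv D1_Gc W] x)
  also have "\<dots> = (\<Sum>j\<in>UNIV. Gc j x *v pd i (W j) x + pd i (Gc j) x *v W j x)"
    by (rule sum.cong[OF refl]) (rule D1_bil(2)[OF bil_mv D1_Gc W x])
  finally show ?thesis .
qed

end

lemma half_lem: "(S::'a::real_vector) = a - S + b \<Longrightarrow> S = (1/2) *\<^sub>R (a + b)"
proof -
  assume e: "S = a - S + b"
  have "S + S = a + b" using e by (metis add.commute add_diff_cancel_left' diff_add_cancel add.assoc)
  then have "(2::real) *\<^sub>R S = a + b" by (simp add: scaleR_2)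
  then have "(1/2::real) *\<^sub>R ((2::real) *\<^sub>R S) = (1/2) *\<^sub>R (a + b)" by simp
  then show ?thesis by simp
qed

context frame begin

lemma GG: "Gc i x ** Gc j x = (\<Sum>b\<in>UNIV. \<Sum>a\<in>UNIV. (f b j x * f a i x) *\<^sub>R (gamma_up a ** gamma_up b))"
  by (simp add: Gc_def mmL scaleR_sum_right)

lemma Gc_anti: "Gc i x ** Gc j x + Gc j x ** Gc i x = (-2 * hinv f i j x) *\<^sub>R mat 1"
proof -
  have "Gc i x ** Gc j x + Gc j x ** Gc i x = (\<Sum>a\<in>UNIV. \<Sum>b\<in>UNIV. (f a i x * f b j x) *\<^sub>R (gamma_up a ** gamma_up b + gamma_up b ** gamma_up a))"
    unfolding GG by (subst (1) sum.swap) (simp add: sum.distrib[symmetric] scaleR_add_right mult.commute)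
  also have "\<dots> = (\<Sum>a\<in>UNIV. \<Sum>b\<in>UNIV. (f a i x * f b j x * (if a = b then -2 else 0)) *\<^sub>R mat 1)"
    by (simp add: anti)
  also have "\<dots> = (-2 * hinv f i j x) *\<^sub>R mat 1"
    by (simp add: scaleR_sum_left[symmetric] hinv_def sum_distrib_left if_distrib[of "\<lambda>z. _ * z"] sum.delta cong: if_cong)
      (simp add: scaleR_sum_left mult_ac)
  finally show ?thesis .
qed

lemma lich:
  assumes U1: "D1 \<Omega> U" and U2: "\<And>j. D1 \<Omega> (pd j U)"
    and sw: "\<And>y i j. y \<in> \<Omega> \<Longrightarrow> pd i (pd j U) y = pd j (pd i U) y" and x: "x \<in> \<Omega>"
  shows "Hcal f (Hcal f U) x = lap f U x - (scal f x / 4) *\<^sub>R U x"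
proof -
  define DU where "DU j = Dsp f j U" for j
  have DU1: "D1 \<Omega> (DU j)" for j using D1_Dsp[OF U1 U2] by (simp add: DU_def)
  define V where "V = (\<lambda>y. \<Sum>j\<in>UNIV. Gc j y *v DU j y)"
  have HU: "Hcal f U = (\<lambda>y. \<i> *s V y)" by (rule ext) (simp add: Hcal_eq V_def DU_def)
  have V1: "D1 \<Omega> V" unfolding V_def by (rule D1_GcV[OF DU1])
  have pdV: "pd i V x = (\<Sum>j\<in>UNIV. Gc j x *v pd i (DU j) x + pd i (Gc j) x *v DU j x)" for i
    unfolding V_def by (rule pd_GcV[OF DU1 x])
  have pdHU: "pd i (Hcal f U) x = \<i> *s pd i V x" for i
    unfolding HU using D1_lin(2)[OF lin_smult[of "\<i>"] V1 x] by simp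
  have cj: "pd i (Gc j) x = Gc j x ** Om i x - Om i x ** Gc j x - (\<Sum>k\<in>UNIV. chr f j i k x *\<^sub>R Gc k x)" for i j
    using compat[OF x, of i j] by (simp add: algebra_simps)
  define Y where "Y i = (\<Sum>j\<in>UNIV. Gc j x *v Dsp f i (DU j) x - (\<Sum>k\<in>UNIV. chr f j i k x *\<^sub>R (Gc k x *v DU j x)))" for i
  have DD: "Dsp f i (Hcal f U) x = \<i> *s Y i" for i
  proof -
    have "Dsp f i (Hcal f U) x = \<i> *s (pd i V x + Om i x *v V x)"
      unfolding Dsp_eq pdHU by (simp add: HU smL)
    also have "pd i V x + Om i x *v V x = Y i"
    proof -
      have "pd i V x + Om i x *v V x = (\<Sum>j\<in>UNIV. Gc j x *v pd i (DU j) x + pd i (Gc j) x *v DU j x + (Om i x ** Gc j x) *v DU j x)"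
        unfolding pdV by (simp add: V_def mvL matrix_vector_mul_assoc sum.distrib)
      also have "\<dots> = Y i"
        unfolding Y_def
      proof (rule sum.cong[OF refl])
        fix j
        show "Gc j x *v pd i (DU j) x + pd i (Gc j) x *v DU j x + (Om i x ** Gc j x) *v DU j x
          = Gc j x *v Dsp f i (DU j) x - (\<Sum>k\<in>UNIV. chr f j i k x *\<^sub>R (Gc k x *v DU j x))"
          by (simp add: cj Dsp_eq mvL matrix_vector_mul_assoc algebra_simps)
      qed
      finally show ?thesis .
    qed
    finally show ?thesis .
  qed
  define X where "X i j = Dsp f i (DU j) x - (\<Sum>k\<in>UNIV. chr f k i j x *\<^sub>R DU k x)" for i j
  have reidx: "(\<Sum>j\<in>UNIV. \<Sum>k\<in>UNIV. chr f j i k x *\<^sub>R (Gc k x *v DU j x)) = (\<Sum>j\<in>UNIV. Gc j x *v (\<Sum>k\<in>UNIV. chr f k i j x *\<^sub>R DU k x))" for i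
  proof -
    have "(\<Sum>j\<in>UNIV. \<Sum>k\<in>UNIV. chr f j i k x *\<^sub>R (Gc k x *v DU j x)) = (\<Sum>k\<in>UNIV. \<Sum>j\<in>UNIV. chr f j i k x *\<^sub>R (Gc k x *v DU j x))"
      by (rule sum.swap)
    also have "\<dots> = (\<Sum>k\<in>UNIV. Gc k x *v (\<Sum>j\<in>UNIV. chr f j i k x *\<^sub>R DU j x))"
      by (simp add: mvL)
    finally show ?thesis .
  qed
  have HH: "Hcal f (Hcal f U) x = - (\<Sum>i\<in>UNIV. \<Sum>j\<in>UNIV. (Gc i x ** Gc j x) *v X i j)"
  proof -
    have "Hcal f (Hcal f U) x = \<i> *s (\<Sum>i\<in>UNIV. Gc i x *v (\<i> *s Y i))"
      by (simp add: Hcal_eq DD)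
    also have "\<dots> = - (\<Sum>i\<in>UNIV. Gc i x *v Y i)"
      by (simp add: sm_mv sm_sum ii_sm sum_negf)
    also have "(\<Sum>i\<in>UNIV. Gc i x *v Y i) = (\<Sum>i\<in>UNIV. \<Sum>j\<in>UNIV. (Gc i x ** Gc j x) *v X i j)"
    proof (rule sum.cong[OF refl])
      fix i
      have "Y i = (\<Sum>j\<in>UNIV. Gc j x *v Dsp f i (DU j) x) - (\<Sum>j\<in>UNIV. Gc j x *v (\<Sum>k\<in>UNIV. chr f k i j x *\<^sub>R DU k x))"
        unfolding Y_def reidx[symmetric] by (simp add: sum_subtractf)
      then show "Gc i x *v Y i = (\<Sum>j\<in>UNIV. (Gc i x ** Gc j x) *v X i j)"
        by (simp add: X_def mvL matrix_vector_mul_assoc sum_subtractf)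
    qed
    finally show ?thesis .
  qed
  have lapX: "lap f U x = (\<Sum>i\<in>UNIV. \<Sum>j\<in>UNIV. hinv f i j x *\<^sub>R X i j)"
    by (simp add: lap_def X_def DU_def)
  have F2: "X i j - X j i = K i j x *v U x" for i j
  proof -
    have "X i j - X j i = Dsp f i (DU j) x - Dsp f j (DU i) x"
      by (simp add: X_def chr_sym[OF x, of _ j i])
    also have "\<dots> = K i j x *v U x"
      by (simp add: DU_def Dsp_eq pd_Dsp[OF U1 U2 x] sw[OF x, of i j] K_def mvL matrix_vector_mul_assoc algebra_simps)
    finally show ?thesis .
  qed
  define S where "S = (\<Sum>i\<in>UNIV. \<Sum>j\<in>UNIV. (Gc i x ** Gc j x) *v X i j)"
  have S1: "S = (\<Sum>i\<in>UNIV. \<Sum>j\<in>UNIV. (Gc j x ** Gc i x) *v X i j) + (\<Sum>i\<in>UNIV. \<Sum>j\<in>UNIV. (Gc i x ** Gc j x ** K i j x) *v U x)"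
  proof -
    have "S = (\<Sum>i\<in>UNIV. \<Sum>j\<in>UNIV. (Gc i x ** Gc j x) *v X j i + (Gc i x ** Gc j x ** K i j x) *v U x)"
      unfolding S_def
    proof (rule sum.cong[OF refl], rule sum.cong[OF refl])
      fix i j
      have "X i j = X j i + K i j x *v U x" using F2[of i j] by (metis diff_add_cancel add.commute)
      then show "(Gc i x ** Gc j x) *v X i j = (Gc i x ** Gc j x) *v X j i + (Gc i x ** Gc j x ** K i j x) *v U x"
        by (simp add: mv_add_right matrix_vector_mul_assoc)
    qed
    also have "\<dots> = (\<Sum>i\<in>UNIV. \<Sum>j\<in>UNIV. (Gc i x ** Gc j x) *v X j i) + (\<Sum>i\<in>UNIV. \<Sum>j\<in>UNIV. (Gc i x ** Gc j x ** K i j x) *v U x)"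
      by (simp add: sum.distrib)
    also have "(\<Sum>i\<in>UNIV. \<Sum>j\<in>UNIV. (Gc i x ** Gc j x) *v X j i) = (\<Sum>i\<in>UNIV. \<Sum>j\<in>UNIV. (Gc j x ** Gc i x) *v X i j)"
      by (rule sum.swap)
    finally show ?thesis .
  qed
  have S2: "(\<Sum>i\<in>UNIV. \<Sum>j\<in>UNIV. (Gc j x ** Gc i x) *v X i j) = (-2) *\<^sub>R lap f U x - S"
  proof -
    have "(\<Sum>i\<in>UNIV. \<Sum>j\<in>UNIV. (Gc j x ** Gc i x) *v X i j) = (\<Sum>i\<in>UNIV. \<Sum>j\<in>UNIV. ((-2 * hinv f i j x) *\<^sub>R mat 1 - Gc i x ** Gc j x) *v X i j)"
      by (rule sum.cong[OF refl], rule sum.cong[OF refl]) (metis Gc_anti add_diff_cancel_left')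
    also have "\<dots> = (-2) *\<^sub>R lap f U x - S"
      by (simp add: lapX S_def mvL sum_subtractf scaleR_sum_right)
    finally show ?thesis .
  qed
  have S3: "(\<Sum>i\<in>UNIV. \<Sum>j\<in>UNIV. (Gc i x ** Gc j x ** K i j x) *v U x) = (scal f x / 2) *\<^sub>R U x"
    by (simp add: mv_sum_left[symmetric] contraction[OF x] mv_scaleR_left)
  have e: "S = (-2) *\<^sub>R lap f U x - S + (scal f x / 2) *\<^sub>R U x" using S1 S2 S3 by simp
  have "S = (1/2) *\<^sub>R ((-2) *\<^sub>R lap f U x + (scal f x / 2) *\<^sub>R U x)" by (rule half_lem[OF e])
  then have "S = - lap f U x + (scal f x / 4) *\<^sub>R U x" by (simp add: scaleR_add_right scaleR_diff_right)
  then show ?thesis using HH unfolding S_def[symmetric] by simp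
qed

end

lemma g0_Cm: "gamma0 ** Cm a b = Cm a b ** gamma0"
proof -
  have "gamma0 ** (gamma_up a ** gamma_up b) = (gamma_up a ** gamma_up b) ** gamma0"
    by (simp add: matrix_mul_assoc g0_anti mm_minus_left mm_minus_right)
      (simp add: matrix_mul_assoc[symmetric] g0_anti mm_minus_left mm_minus_right)
  moreover have "gamma0 ** (gamma_up b ** gamma_up a) = (gamma_up b ** gamma_up a) ** gamma0"
    by (simp add: matrix_mul_assoc g0_anti mm_minus_left mm_minus_right)
      (simp add: matrix_mul_assoc[symmetric] g0_anti mm_minus_left mm_minus_right)
  ultimately show ?thesis by (simp add: Cm_up mm_diff_left mm_diff_right)
qed

context frame begin

lemma g0_Om: "gamma0 ** Om j x = Om j x ** gamma0"
  by (simp add: Om_def mmL g0_Cm)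

lemma g0_Gc: "Gc j x ** gamma0 = - (gamma0 ** Gc j x)"
  by (simp add: Gc_def mmL g0_anti sum_negf)

lemma D1_Hcal: "D1 \<Omega> U \<Longrightarrow> (\<And>j. D1 \<Omega> (pd j U)) \<Longrightarrow> D1 \<Omega> (Hcal f U)"
proof -
  assume U1: "D1 \<Omega> U" and U2: "\<And>j. D1 \<Omega> (pd j U)"
  have "Hcal f U = (\<lambda>y. \<i> *s (\<Sum>j\<in>UNIV. Gc j y *v Dsp f j U y))" by (rule ext) (rule Hcal_eq)
  moreover have "D1 \<Omega> (\<lambda>y. \<i> *s (\<Sum>j\<in>UNIV. Gc j y *v Dsp f j U y))"
    by (rule D1_lin(1)[OF lin_smult D1_GcV[OF D1_Dsp[OF U1 U2]]])
  ultimately show ?thesis by simp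
qed

lemma lin_g0: "bounded_linear (\<lambda>v::complex^4. - (gamma0 *v v))"
  by (intro bounded_linear_minus lin_mv)

lemma D1_Hop: "D1 \<Omega> U \<Longrightarrow> (\<And>j. D1 \<Omega> (pd j U)) \<Longrightarrow> D1 \<Omega> (Hop f m U)"
proof -
  assume U1: "D1 \<Omega> U" and U2: "\<And>j. D1 \<Omega> (pd j U)"
  have "D1 \<Omega> (\<lambda>y. - (gamma0 *v (Hcal f U y + complex_of_real m *s U y)))"
    by (rule D1_lin(1)[OF lin_g0 D1_add(1)[OF D1_Hcal[OF U1 U2] D1_lin(1)[OF lin_smult U1]]])
  then show ?thesis by (simp add: Hop_def[abs_def])
qed

lemma Dsp_g0:
  assumes H1: "D1 \<Omega> H1" and U1: "D1 \<Omega> U" and x: "x \<in> \<Omega>"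
  shows "Dsp f j (\<lambda>y. - (gamma0 *v (H1 y + c *s U y))) x = - (gamma0 *v (Dsp f j H1 x + c *s Dsp f j U x))"
proof -
  have A: "D1 \<Omega> (\<lambda>y. H1 y + c *s U y)" by (rule D1_add(1)[OF H1 D1_lin(1)[OF lin_smult U1]])
  have "pd j (\<lambda>y. - (gamma0 *v (H1 y + c *s U y))) x = - (gamma0 *v (pd j H1 x + c *s pd j U x))"
    using D1_lin(2)[OF lin_g0 A x, of j] D1_add(2)[OF H1 D1_lin(1)[OF lin_smult U1] x, of j]
      D1_lin(2)[OF lin_smult U1 x, of j] by simp
  then show ?thesis
    by (simp add: Dsp_eq mvL smL matrix_vector_mul_assoc g0_Om)
qed

lemma Hcal_g0:
  assumes H1: "D1 \<Omega> H1" and U1: "D1 \<Omega> U" and x: "x \<in> \<Omega>"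
  shows "Hcal f (\<lambda>y. - (gamma0 *v (H1 y + c *s U y))) x = gamma0 *v (Hcal f H1 x + c *s Hcal f U x)"
proof -
  have "Hcal f (\<lambda>y. - (gamma0 *v (H1 y + c *s U y))) x = \<i> *s (\<Sum>j\<in>UNIV. Gc j x *v (- (gamma0 *v (Dsp f j H1 x + c *s Dsp f j U x))))"
    by (simp add: Hcal_eq Dsp_g0[OF H1 U1 x])
  also have "\<dots> = \<i> *s (\<Sum>j\<in>UNIV. gamma0 *v (Gc j x *v (Dsp f j H1 x + c *s Dsp f j U x)))"
    by (simp add: matrix_vector_mul_assoc g0_Gc mvL)
  also have "\<dots> = gamma0 *v (Hcal f H1 x + c *s Hcal f U x)"
    by (simp add: Hcal_eq mvL smL sum.distrib vector_smult_assoc mult.commute)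
  finally show ?thesis .
qed

lemma hop2:
  assumes U1: "D1 \<Omega> U" and U2: "\<And>j. D1 \<Omega> (pd j U)" and x: "x \<in> \<Omega>"
  shows "Hop f m (Hop f m U) x = - Hcal f (Hcal f U) x + (m^2) *\<^sub>R U x"
proof -
  have e: "Hop f m U = (\<lambda>y. - (gamma0 *v (Hcal f U y + complex_of_real m *s U y)))"
    by (simp add: Hop_def[abs_def])
  have h1: "Hcal f (Hop f m U) x = gamma0 *v (Hcal f (Hcal f U) x + complex_of_real m *s Hcal f U x)"
    unfolding e by (rule Hcal_g0[OF D1_Hcal[OF U1 U2] U1 x])
  have h2: "Hop f m U x = - (gamma0 *v (Hcal f U x + complex_of_real m *s U x))" by (rule Hop_def)
  have "Hop f m (Hop f m U) x = - (gamma0 *v (Hcal f (Hop f m U) x + complex_of_real m *s Hop f m U x))"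
    by (rule Hop_def)
  also have "\<dots> = - (gamma0 *v (gamma0 *v (Hcal f (Hcal f U) x + complex_of_real m *s Hcal f U x)
      + complex_of_real m *s (- (gamma0 *v (Hcal f U x + complex_of_real m *s U x)))))"
    unfolding h1 h2 ..
  also have "\<dots> = - Hcal f (Hcal f U) x + (m^2) *\<^sub>R U x"
    by (simp add: matrix_vector_mul_assoc g0_sq mvL smL vector_smult_assoc vec_eq_iff sR_cx power2_eq_square algebra_simps)
  finally show ?thesis .
qed

lemma Hop_local:
  assumes x: "x \<in> \<Omega>" and eq: "\<And>y. y \<in> \<Omega> \<Longrightarrow> V y = W y"
  shows "Hop f m V x = Hop f m W x"
proof -
  have "pd j V x = pd j W x" for j by (rule pd_local[OF opn x eq])
  then show ?thesis by (simp add: Hop_def Hcal_def Dsp_def eq[OF x])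
qed

lemma Hop_smult:
  assumes H: "D1 \<Omega> H" and x: "x \<in> \<Omega>"
  shows "Hop f m (\<lambda>y. c *s H y) x = c *s Hop f m H x"
proof -
  have pdc: "pd j (\<lambda>y. c *s H y) x = c *s pd j H x" for j by (rule D1_lin(2)[OF lin_smult H x])
  show ?thesis
    unfolding Hop_def Hcal_def Dsp_def pdc
    by (simp add: smL mvL vec_eq_iff algebra_simps)
qed

end

lemma pair_line: "(s::real, y::real^3) + \<sigma> *\<^sub>R (0::real, v) = (s, y + \<sigma> *\<^sub>R v)"
  by simp

lemma pair_line_t: "(s::real, y::real^3) + \<sigma> *\<^sub>R (1::real, 0::real^3) = (s + \<sigma>, y)"
  by simp

lemma slice1: "iter_dpart [(0::real, v)] (\<lambda>(t,x). u t x) (s, y) = dpart v (u s) y"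
  using slice[of "[v]" u s y] by simp

lemma slice2: "iter_dpart [(0::real, v), (0, w)] (\<lambda>(t,x). u t x) (s, y) = dpart v (dpart w (u s)) y"
  using slice[of "[v, w]" u s y] by simp

lemma sl_D1:
  fixes u :: "real \<Rightarrow> real^3 \<Rightarrow> complex^4"
  assumes sm: "smooth_on (UNIV \<times> \<Omega>) (\<lambda>(t, x). u t x)"
  shows "D1 \<Omega> (u s)" and "D1 \<Omega> (pd j (u s))"
proof -
  show "D1 \<Omega> (u s)"
  proof (rule D1I)
    fix y i assume y: "y \<in> \<Omega>"
    have "((\<lambda>\<sigma>. iter_dpart [] (\<lambda>(t,x). u t x) ((s,y) + \<sigma> *\<^sub>R (0, axis i 1))) has_vector_derivative
       dpart (0, axis i 1) (iter_dpart [] (\<lambda>(t,x). u t x)) (s,y)) (at 0)"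
      by (rule smooth_deriv[OF sm]) (use y Basis_x in auto)
    then show "\<exists>D. ((\<lambda>\<sigma>. u s (y + \<sigma> *\<^sub>R axis i 1)) has_vector_derivative D) (at 0)" by auto
  qed
  show "D1 \<Omega> (pd j (u s))"
  proof (rule D1I)
    fix y i assume y: "y \<in> \<Omega>"
    have "((\<lambda>\<sigma>. iter_dpart [(0, axis j 1)] (\<lambda>(t,x). u t x) ((s,y) + \<sigma> *\<^sub>R (0, axis i 1))) has_vector_derivative
       dpart (0, axis i 1) (iter_dpart [(0, axis j 1)] (\<lambda>(t,x). u t x)) (s,y)) (at 0)"
      by (rule smooth_deriv[OF sm]) (use y Basis_x in auto)
    then show "\<exists>D. ((\<lambda>\<sigma>. pd j (u s) (y + \<sigma> *\<^sub>R axis i 1)) has_vector_derivative D) (at 0)"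
      unfolding pair_line slice1 pd_fun by auto
  qed
qed

lemma sl_sw:
  fixes u :: "real \<Rightarrow> real^3 \<Rightarrow> complex^4"
  assumes o: "open \<Omega>" and sm: "smooth_on (UNIV \<times> \<Omega>) (\<lambda>(t, x). u t x)" and y: "y \<in> \<Omega>"
  shows "pd i (pd j (u s)) y = pd j (pd i (u s)) y"
proof -
  have "dpart (0, axis i 1) (dpart (0, axis j 1) (\<lambda>(t, x). u t x)) (s, y) = dpart (0, axis j 1) (dpart (0, axis i 1) (\<lambda>(t, x). u t x)) (s, y)"
    by (rule smooth_schwarz[OF open_Times[OF open_UNIV o] sm]) (use y Basis_x in auto)
  then show ?thesis using slice2[of "axis i 1" "axis j 1" u s y] slice2[of "axis j 1" "axis i 1" u s y]
    by (simp add: pd_fun)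
qed

lemma sl_t1:
  fixes u :: "real \<Rightarrow> real^3 \<Rightarrow> complex^4"
  assumes sm: "smooth_on (UNIV \<times> \<Omega>) (\<lambda>(t, x). u t x)" and y: "y \<in> \<Omega>"
  shows "((\<lambda>s. u s y) has_vector_derivative dt u t y) (at t)"
proof -
  have "((\<lambda>\<sigma>. iter_dpart [] (\<lambda>(t,x). u t x) ((t,y) + \<sigma> *\<^sub>R (1, 0))) has_vector_derivative
       dpart (1, 0) (iter_dpart [] (\<lambda>(t,x). u t x)) (t,y)) (at 0)"
    by (rule smooth_deriv[OF sm]) (use y Basis_t in auto)
  then have "((\<lambda>\<sigma>. u (t + \<sigma>) y) has_vector_derivative dt u t y) (at 0)"
    by (simp add: slice_t)
  then show ?thesis using hvd_shift[of "\<lambda>s. u s y" t] by simp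
qed

lemma sl_t2:
  fixes u :: "real \<Rightarrow> real^3 \<Rightarrow> complex^4"
  assumes o: "open \<Omega>" and sm: "smooth_on (UNIV \<times> \<Omega>) (\<lambda>(t, x). u t x)" and y: "y \<in> \<Omega>"
  shows "((\<lambda>s. pd j (u s) y) has_vector_derivative pd j (dt u t) y) (at t)"
proof -
  have "((\<lambda>\<sigma>. iter_dpart [(0, axis j 1)] (\<lambda>(t,x). u t x) ((t,y) + \<sigma> *\<^sub>R (1, 0))) has_vector_derivative
       dpart (1, 0) (iter_dpart [(0, axis j 1)] (\<lambda>(t,x). u t x)) (t,y)) (at 0)"
    by (rule smooth_deriv[OF sm]) (use y Basis_t Basis_x in auto)
  moreover have "dpart (1, 0) (iter_dpart [(0, axis j 1)] (\<lambda>(t,x). u t x)) (t,y)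
      = dpart (0, axis j 1) (dpart (1, 0) (\<lambda>(t,x). u t x)) (t,y)"
    by (simp, rule smooth_schwarz[OF open_Times[OF open_UNIV o] sm]) (use y Basis_t Basis_x in auto)
  moreover have "dpart (0, axis j 1) (dpart (1, 0) (\<lambda>(t,x). u t x)) (t,y) = pd j (dt u t) y"
    unfolding dpart_def[of "(0, axis j 1)"] pd_def dpart_def[of "axis j 1"] pair_line
    by (simp add: slice_t)
  ultimately have "((\<lambda>\<sigma>. pd j (u (t + \<sigma>)) y) has_vector_derivative pd j (dt u t) y) (at 0)"
    unfolding pair_line_t slice1 pd_fun by simp
  then show ?thesis using hvd_shift[of "\<lambda>s. pd j (u s) y" t] by simp
qed

lemma sR_sm: "r *\<^sub>R (v::complex^4) = complex_of_real r *s v"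
  by (simp add: vec_eq_iff sR_cx)

theorem corollary3p5:
  fixes f :: "3 \<Rightarrow> 3 \<Rightarrow> real^3 \<Rightarrow> real"
    and \<Omega> :: "(real^3) set"
    and \<phi> :: "real \<Rightarrow> real"
    and m :: real
    and u :: "real \<Rightarrow> real^3 \<Rightarrow> complex^4"
  assumes "open \<Omega>" and "connected \<Omega>"
    and "\<And>a i. smooth_on \<Omega> (f a i)"
    and "\<And>x. x \<in> \<Omega> \<Longrightarrow> det (\<chi> a i. f a i x) \<noteq> 0"
    and "smooth_on UNIV \<phi>" and "\<And>t. \<phi> t > 0"
    and "m \<ge> 0"
    and "smooth_on (UNIV \<times> \<Omega>) (\<lambda>(t, x). u t x)"
    and "\<And>t x. x \<in> \<Omega> \<Longrightarrow>
           (\<i> * complex_of_real (\<phi> t)) *s dt u t x - Hop f m (u t) x = 0"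
  shows "\<And>t x. x \<in> \<Omega> \<Longrightarrow>
           - (\<phi> t *\<^sub>R dt (\<lambda>s y. \<phi> s *\<^sub>R dt u s y) t x)
           + lap f (u t) x - (scal f x / 4) *\<^sub>R u t x - m\<^sup>2 *\<^sub>R u t x = 0"
proof -
  have oo: "open \<Omega>" using assms by blast
  have smu: "smooth_on (UNIV \<times> \<Omega>) (\<lambda>(t, x). u t x)" using assms by blast
  have phi: "\<And>t. \<phi> t > 0" using assms by blast
  have eq0: "\<And>t x. x \<in> \<Omega> \<Longrightarrow> (\<i> * complex_of_real (\<phi> t)) *s dt u t x - Hop f m (u t) x = 0"
    using assms by blast
  have smf: "\<And>a i. smooth_on \<Omega> (f a i)" using assms by blast
  have dtf: "\<And>x. x \<in> \<Omega> \<Longrightarrow> det (\<chi> a i. f a i x) \<noteq> 0" using assms by blast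
  interpret frame f \<Omega> by unfold_locales (use oo smf dtf in auto)
  fix t x assume x: "x \<in> \<Omega>"
  have U1: "D1 \<Omega> (u s)" for s by (rule sl_D1(1)[OF smu])
  have U2: "D1 \<Omega> (pd j (u s))" for s j by (rule sl_D1(2)[OF smu])
  have sw: "pd i (pd j (u s)) y = pd j (pd i (u s)) y" if "y \<in> \<Omega>" for s i j y
    by (rule sl_sw[OF oo smu that])
  have eq: "(\<i> * complex_of_real (\<phi> s)) *s dt u s y = Hop f m (u s) y" if "y \<in> \<Omega>" for s y
    using eq0[OF that, of s] by simp
  have e1: "\<phi> s *\<^sub>R dt u s y = (- \<i>) *s Hop f m (u s) y" if "y \<in> \<Omega>" for s y
  proof -
    have "(- \<i>) *s Hop f m (u s) y = (- \<i>) *s ((\<i> * complex_of_real (\<phi> s)) *s dt u s y)" by (simp add: eq[OF that])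
    also have "\<dots> = complex_of_real (\<phi> s) *s dt u s y" by (simp add: vector_smult_assoc)
    finally show ?thesis by (simp add: sR_sm)
  qed
  have pn: "complex_of_real (\<phi> t) \<noteq> 0" using phi[of t] by simp
  have e2: "dt u t y = (- \<i> / complex_of_real (\<phi> t)) *s Hop f m (u t) y" if "y \<in> \<Omega>" for y
  proof -
    have "(- \<i> / complex_of_real (\<phi> t)) *s Hop f m (u t) y = (- \<i> / complex_of_real (\<phi> t)) *s ((\<i> * complex_of_real (\<phi> t)) *s dt u t y)"
      by (simp add: eq[OF that])
    also have "\<dots> = dt u t y" using pn by (simp add: vector_smult_assoc field_simps)
    finally show ?thesis by simp
  qed
  have hder: "((\<lambda>s. Hop f m (u s) x) has_vector_derivative Hop f m (dt u t) x) (at t)"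
    unfolding Hop_def Hcal_def Dsp_def
    by (intro has_vector_derivative_minus bounded_linear.has_vector_derivative[OF lin_mv]
        has_vector_derivative_add bounded_linear.has_vector_derivative[OF lin_smult]
        has_vector_derivative_sum bounded_linear.has_vector_derivative[OF bounded_linear_scaleR_right]
        sl_t1[OF smu x] sl_t2[OF oo smu x])
  have "dt (\<lambda>s y. \<phi> s *\<^sub>R dt u s y) t x = vector_derivative (\<lambda>s. \<phi> s *\<^sub>R dt u s x) (at t)"
    by (simp add: dt_def[of "\<lambda>s y. \<phi> s *\<^sub>R dt u s y"])
  also have "\<dots> = vector_derivative (\<lambda>s. (- \<i>) *s Hop f m (u s) x) (at t)"
    using e1[OF x] by simp
  also have "\<dots> = (- \<i>) *s Hop f m (dt u t) x"
    by (rule vector_derivative_at, rule bounded_linear.has_vector_derivative[OF lin_smult hder])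
  also have "Hop f m (dt u t) x = Hop f m (\<lambda>y. (- \<i> / complex_of_real (\<phi> t)) *s Hop f m (u t) y) x"
    by (rule Hop_local[OF x e2])
  also have "\<dots> = (- \<i> / complex_of_real (\<phi> t)) *s Hop f m (Hop f m (u t)) x"
    by (rule Hop_smult[OF D1_Hop[OF U1 U2] x])
  finally have dtt: "\<phi> t *\<^sub>R dt (\<lambda>s y. \<phi> s *\<^sub>R dt u s y) t x = - Hop f m (Hop f m (u t)) x"
    using pn by (simp add: sR_sm vector_smult_assoc field_simps)
  have hh: "Hop f m (Hop f m (u t)) x = - (lap f (u t) x - (scal f x / 4) *\<^sub>R u t x) + (m^2) *\<^sub>R u t x"
    using hop2[OF U1 U2 x] lich[OF U1 U2 sw x] by simp
  show "- (\<phi> t *\<^sub>R dt (\<lambda>s y. \<phi> s *\<^sub>R dt u s y) t x)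
           + lap f (u t) x - (scal f x / 4) *\<^sub>R u t x - m\<^sup>2 *\<^sub>R u t x = 0"
    unfolding dtt hh by simp
qed

end
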